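(* Let $k$ be an algebraically closed field, $n\ge1$, $1\le g\le n$, and let $K$ and the representations $V_{(p,q)}$ be as in the context. Fix $m\in\mathbb N$. Let $Q_m^0$ be the quiver with vertices $(r,s)_0$ for $s\in\{1,\dots,g\}$ and $0\le r\le gm+s$, and arrows $\pi_0(r,s):(r+1,s^+)_0\to(r,s)_0$ and $\rho_0(r,s):(r,s)_0\to(r+1,s)_0$ whenever both endpoints are vertices of $Q_m^0$, where $s^+\in\{1,\dots,g\}$, $s^+\equiv s+1\pmod g$. Let $F_0:kQ_m^0\to\operatorname{rep}K$ be the $k$-linear functor on the path category defined in the context, and let $R_m^0$ be the full subcategory of $\operatorname{rep}K$ whose objects are the $F_0X$, $X$ a vertex of $Q_m^0$. Let $\overline{kQ_m^0}$ be the quotient of the path category $kQ_m^0$ by the ideal generated by (i) $\pi_0(r+1,s)\circ\rho_0(r+1,s^+)=\rho_0(r,s)\circ\pi_0(r,s)$ for all $r,s$ for which all arrows involved lie in $Q_m^0$, and (ii) $\pi_0(0,s)\circ\rho_0(0,s^+)=0$ for all $s\in\{1,\dots,g\}$. Then $F_0$ induces an isomorphism of $k$-categories $\overline{F_0}:\overline{kQ_m^0}\to R_m^0$.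
   Context: $K$: quiver with vertices $0,\dots,n$ and arrows $\beta_x:x\to x+1$ ($0\le x\le g-1$) and $\alpha_x:x+1\to x$ ($g\le x\le n$), indices modulo $n+1$; $\operatorname{rep}K$ is the category of finite-dimensional representations. For $0\le p\le n$, $q\ge p$: $V_{(p,q)}(x)$ is spanned by the basis vectors $e_i$, $p\le i\le q$, $i\equiv x\pmod{n+1}$; $V_{(p,q)}(\beta_x)(e_i)=e_{i+1}$ if $i<q$, $=0$ if $i=q$; $V_{(p,q)}(\alpha_x)(e_i)=e_{i-1}$ if $i>p$, $=0$ if $i=p$. Composition $\circ$ is written right to left (apply the right factor first). Definition of $F_0$ on vertices: for $(r,s)$ with $r\in\mathbb N$, $s\in\mathbb Z$, let $p\in\{1,\dots,g\}$ with $p\equiv s-r\pmod g$, $q'\in\{0,\dots,g-1\}$ with $q'\equiv s\pmod g$, and $t$ the number of integers $s'$ with $s'\equiv0\pmod g$ and $s-r\le s'\le s$; put $F(r,s)=V_{(p,\,q'+t(n+1))}$ (this depends only on $s$ modulo $g$), and $F_0(r,s)_0=F(r,s)$. On arrows: if $F(r,s)=V_{(p,q)}$, then $F_0\pi_0(r,s):F(r+1,s+1)\to F(r,s)$ is $e_t\mapsto e_t$ for $p\le t\le q$ and $e_t\mapsto 0$ for $t>q$; and $F_0\rho_0(r,s):F(r,s)\to F(r+1,s)$ is $e_t\mapsto e_t$ ($p\le t\le q$) if $2\le p\le g$, and $e_t\mapsto e_{t+n+1}$ ($p\le t\le q$) if $p=1$. The path category $kQ$ of a quiver $Q$ has the vertices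 as objects and $k$-linear combinations of paths as morphisms. *)

theory Defs
  imports "HOL-Computational_Algebra.Polynomial"
begin

text \<open>A k-linear map between spans of basis vectors e_i (i :: nat) is encoded by its
 matrix M: M i j is the coefficient of e_i in the image of e_j.  A basis range is a
 pair (p,q) standing for the basis {e_i. p \<le> i \<le> q}.\<close>

type_synonym 'k mat = "nat \<Rightarrow> nat \<Rightarrow> 'k"

definition mat_mult :: "nat \<times> nat \<Rightarrow> 'k::field mat \<Rightarrow> 'k mat \<Rightarrow> 'k mat" where
  "mat_mult pq A B = (\<lambda>i j. \<Sum>l\<in>{fst pq..snd pq}. A i l * B l j)"

definition id_mat :: "nat \<times> nat \<Rightarrow> 'k::field mat" where
  "id_mat pq = (\<lambda>i j. if i = j \<and> fst pq \<le> j \<and> j \<le> snd pq then 1 else 0)"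

text \<open>Arrow number a (0 \<le> a \<le> n) of K is beta_a : a \<rightarrow> a+1 if a < g, and
 alpha_a : a+1 \<rightarrow> a (indices mod n+1) if g \<le> a.  The basis vector e_i of V_(p,q)
 lies at vertex i mod (n+1).  Rep n g p q a is the matrix of V_(p,q)(arrow a),
 viewed as an endomorphism of the total space (zero outside the source vertex).\<close>

definition Rep :: "nat \<Rightarrow> nat \<Rightarrow> nat \<Rightarrow> nat \<Rightarrow> nat \<Rightarrow> 'k::field mat" where
  "Rep n g p q a = (\<lambda>i j.
     if a < g then
       (if j mod (n+1) = a \<and> p \<le> j \<and> j < q \<and> i = j + 1 then 1 else 0)
     else
       (if j mod (n+1) = (a+1) mod (n+1) \<and> p < j \<and> j \<le> q \<and> i = j - 1 then 1 else 0))"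

text \<open>Hom_{rep K}(V_(p,q), V_(p',q')): families of linear maps at the vertices
 (encoded as one vertex-graded matrix) commuting with all arrows of K.\<close>

definition HomK :: "nat \<Rightarrow> nat \<Rightarrow> nat \<times> nat \<Rightarrow> nat \<times> nat \<Rightarrow> 'k::field mat set" where
  "HomK n g V W = {M.
     (\<forall>i j. M i j \<noteq> 0 \<longrightarrow> fst V \<le> j \<and> j \<le> snd V \<and> fst W \<le> i \<and> i \<le> snd W
                        \<and> i mod (n+1) = j mod (n+1)) \<and>
     (\<forall>a\<le>n. mat_mult W (Rep n g (fst W) (snd W) a) M = mat_mult V M (Rep n g (fst V) (snd V) a))}"

datatype arr = Pi nat nat | Rho nat nat

definition splus :: "nat \<Rightarrow> nat \<Rightarrow> nat" where
  "splus g s = s mod g + 1"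

definition is_vertex :: "nat \<Rightarrow> nat \<Rightarrow> nat \<times> nat \<Rightarrow> bool" where
  "is_vertex g m X = (1 \<le> snd X \<and> snd X \<le> g \<and> fst X \<le> g * m + snd X)"

fun src :: "nat \<Rightarrow> arr \<Rightarrow> nat \<times> nat" where
  "src g (Pi r s) = (r + 1, splus g s)"
| "src g (Rho r s) = (r, s)"

fun tgt :: "nat \<Rightarrow> arr \<Rightarrow> nat \<times> nat" where
  "tgt g (Pi r s) = (r, s)"
| "tgt g (Rho r s) = (r + 1, s)"

definition is_arrow :: "nat \<Rightarrow> nat \<Rightarrow> arr \<Rightarrow> bool" where
  "is_arrow g m a = (is_vertex g m (src g a) \<and> is_vertex g m (tgt g a))"

text \<open>Paths are lists of arrows in the order in which they are applied
 (so [a1,a2] is the composite a2 \<circ> a1).\<close>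

fun is_path :: "nat \<Rightarrow> nat \<Rightarrow> nat \<times> nat \<Rightarrow> arr list \<Rightarrow> nat \<times> nat \<Rightarrow> bool" where
  "is_path g m X [] Y = (X = Y \<and> is_vertex g m X)"
| "is_path g m X (a # w) Y = (is_arrow g m a \<and> src g a = X \<and> is_path g m (tgt g a) w Y)"

definition kQ :: "nat \<Rightarrow> nat \<Rightarrow> nat \<times> nat \<Rightarrow> nat \<times> nat \<Rightarrow> (arr list \<Rightarrow> 'k::field) set" where
  "kQ g m X Y = {c. finite {w. c w \<noteq> 0} \<and> (\<forall>w. c w \<noteq> 0 \<longrightarrow> is_path g m X w Y)}"

definition path_vec :: "arr list \<Rightarrow> arr list \<Rightarrow> 'k::field" where
  "path_vec u = (\<lambda>w. if w = u then 1 else 0)"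

text \<open>Generating relations, as triples (start, combination of paths, end).\<close>

definition Rels :: "nat \<Rightarrow> nat \<Rightarrow> ((nat \<times> nat) \<times> (arr list \<Rightarrow> 'k::field) \<times> (nat \<times> nat)) set" where
  "Rels g m =
     {((r+1, splus g s),
       (\<lambda>w. path_vec [Rho (r+1) (splus g s), Pi (r+1) s] w - path_vec [Pi r s, Rho r s] w),
       (r+1, s)) | r s.
        1 \<le> s \<and> s \<le> g \<and>
        is_arrow g m (Rho (r+1) (splus g s)) \<and> is_arrow g m (Pi (r+1) s) \<and>
        is_arrow g m (Pi r s) \<and> is_arrow g m (Rho r s)}
   \<union> {((0, splus g s), path_vec [Rho 0 (splus g s), Pi 0 s], (0, s)) | s. 1 \<le> s \<and> s \<le> g}"

text \<open>v \<circ> \<rho> \<circ> u for paths u, v and a combination \<rho> of paths.\<close>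

definition sandwich :: "arr list \<Rightarrow> (arr list \<Rightarrow> 'k::field) \<Rightarrow> arr list \<Rightarrow> arr list \<Rightarrow> 'k" where
  "sandwich u \<rho> v = (\<lambda>w. if \<exists>w'. w = u @ w' @ v then \<rho> (THE w'. w = u @ w' @ v) else 0)"

definition ideal_gens :: "nat \<Rightarrow> nat \<Rightarrow> nat \<times> nat \<Rightarrow> nat \<times> nat \<Rightarrow> (arr list \<Rightarrow> 'k::field) set" where
  "ideal_gens g m X Y = {sandwich u \<rho> v | u \<rho> v A B.
      (A, \<rho>, B) \<in> Rels g m \<and> is_path g m X u A \<and> is_path g m B v Y}"

definition ideal :: "nat \<Rightarrow> nat \<Rightarrow> nat \<times> nat \<Rightarrow> nat \<times> nat \<Rightarrow> (arr list \<Rightarrow> 'k::field) set" where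
  "ideal g m X Y = {h. \<exists>N (a :: nat \<Rightarrow> 'k) G. (\<forall>i<N. G i \<in> ideal_gens g m X Y)
                        \<and> h = (\<lambda>w. \<Sum>i<N. a i * G i w)}"

definition Fobj :: "nat \<Rightarrow> nat \<Rightarrow> nat \<times> nat \<Rightarrow> nat \<times> nat" where
  "Fobj n g X = (let r = fst X; s = snd X;
      p = nat ((int s - int r - 1) mod int g + 1);
      q' = s mod g;
      t = card {s'::int. int s - int r \<le> s' \<and> s' \<le> int s \<and> int g dvd s'}
    in (p, q' + t * (n + 1)))"

fun Farr :: "nat \<Rightarrow> nat \<Rightarrow> arr \<Rightarrow> 'k::field mat" where
  "Farr n g (Pi r s) = (\<lambda>i j.
     (let S = Fobj n g (r + 1, splus g s); T = Fobj n g (r, s) in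
      if fst S \<le> j \<and> j \<le> snd S \<and> i = j \<and> fst T \<le> j \<and> j \<le> snd T then 1 else 0))"
| "Farr n g (Rho r s) = (\<lambda>i j.
     (let S = Fobj n g (r, s) in
      if fst S \<le> j \<and> j \<le> snd S \<and> i = (if fst S = 1 then j + (n + 1) else j) then 1 else 0))"

fun Fpath :: "nat \<Rightarrow> nat \<Rightarrow> nat \<times> nat \<Rightarrow> arr list \<Rightarrow> 'k::field mat" where
  "Fpath n g X [] = id_mat (Fobj n g X)"
| "Fpath n g X (a # w) = mat_mult (Fobj n g (tgt g a)) (Fpath n g (tgt g a) w) (Farr n g a)"

definition Fmor :: "nat \<Rightarrow> nat \<Rightarrow> nat \<times> nat \<Rightarrow> (arr list \<Rightarrow> 'k::field) \<Rightarrow> 'k mat" where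
  "Fmor n g X c = (\<lambda>i j. \<Sum>w\<in>{w. c w \<noteq> 0}. c w * Fpath n g X w i j)"

end

theory Submission
  imports Defs
begin


lemma le_div_iff_int: "0 < (b::int) \<Longrightarrow> (k \<le> a div b) = (b * k \<le> a)"
proof -
  assume b: "0 < b"
  have e: "a - b*k = a + (-k) * b" by simp
  have "(a + (-k) * b) div b = -k + a div b" using b by (intro div_mult_self1) simp
  hence "(a - b*k) div b = a div b - k" unfolding e by simp
  moreover have "(0 \<le> (a - b*k) div b) = (0 \<le> a - b*k)" using b by (rule pos_imp_zdiv_nonneg_iff)
  ultimately show ?thesis by simp
qed

lemma div_less_iff_int: "0 < (b::int) \<Longrightarrow> (a div b < k) = (a < b * k)"
  using le_div_iff_int[of b k a] by linarith

definition phi :: "nat \<Rightarrow> nat \<Rightarrow> int \<Rightarrow> int" where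
  "phi n g y = (int n + 1) * (y div int g) + y mod int g"

lemma phi_shift: "0 < g \<Longrightarrow> phi n g (y + int g * k) = phi n g y + (int n + 1) * k"
  unfolding phi_def by (simp add: algebra_simps)

lemma phi_mono_strict:
  assumes g: "0 < g" "g \<le> n + 1" and xy: "x < y"
  shows "phi n g x < phi n g y"
proof -
  have gp: "(0::int) < int g" using g by simp
  have d: "x div int g \<le> y div int g" using xy gp by (simp add: zdiv_mono1)
  have x: "x = int g * (x div int g) + x mod int g" by simp
  have y: "y = int g * (y div int g) + y mod int g" by simp
  have xm: "0 \<le> x mod int g" "x mod int g < int g" using gp by auto
  have ym: "0 \<le> y mod int g" "y mod int g < int g" using gp by auto
  show ?thesis
  proof (cases "x div int g = y div int g")
    case True
    have "x = int g * (y div int g) + x mod int g" using x True by simp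
    then have "x mod int g < y mod int g" using y xy by linarith
    then show ?thesis unfolding phi_def using True by simp
  next
    case False
    then have lt: "x div int g + 1 \<le> y div int g" using d by simp
    have "(int n + 1) * (x div int g + 1) \<le> (int n + 1) * (y div int g)"
      using lt by (simp add: mult_left_mono)
    then have h: "(int n + 1) * (x div int g) + (int n + 1) \<le> (int n + 1) * (y div int g)"
      by (simp add: algebra_simps)
    have "int g \<le> int n + 1" using g by simp
    then show ?thesis unfolding phi_def using xm ym h by linarith
  qed
qed

lemma phi_mono:
  assumes g: "0 < g" "g \<le> n + 1" and xy: "x \<le> y"
  shows "phi n g x \<le> phi n g y"
  using phi_mono_strict[OF g] xy by (cases "x = y") (auto simp: less_le)

lemma phi_less_iff:
  assumes g: "0 < g" "g \<le> n + 1"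
  shows "(phi n g x < phi n g y) = (x < y)"
  using phi_mono_strict[OF g, of x y] phi_mono[OF g, of y x] by (meson leD leI)

lemma phi_le_iff:
  assumes g: "0 < g" "g \<le> n + 1"
  shows "(phi n g x \<le> phi n g y) = (x \<le> y)"
  using phi_mono_strict[OF g, of y x] phi_mono[OF g, of x y] by (meson leD leI)


lemma card_mult_int:
  fixes g :: nat and lo hi :: int
  assumes g: "g > 0" and lh: "lo \<le> hi + 1"
  shows "int (card {x::int. lo \<le> x \<and> x \<le> hi \<and> int g dvd x}) = hi div int g - (lo - 1) div int g"
proof -
  have gp: "int g > 0" using g by simp
  have eq: "{x::int. lo \<le> x \<and> x \<le> hi \<and> int g dvd x} = (\<lambda>k. int g * k) ` {(lo - 1) div int g + 1 .. hi div int g}"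
  proof (safe)
    fix x assume a: "lo \<le> x" "x \<le> hi" "int g dvd x"
    then obtain k where k: "x = int g * k" by (auto elim: dvdE)
    have "k \<le> hi div int g" using a k gp by (simp add: le_div_iff_int)
    moreover have "(lo - 1) div int g < k" using a k gp by (simp add: div_less_iff_int)
    ultimately show "x \<in> (\<lambda>k. int g * k) ` {(lo - 1) div int g + 1 .. hi div int g}" using k by auto
  next
    fix k assume "k \<in> {(lo - 1) div int g + 1 .. hi div int g}"
    then have k1: "(lo - 1) div int g < k" and k2: "k \<le> hi div int g" by auto
    show "int g * k \<le> hi" using k2 gp by (simp add: le_div_iff_int)
    show "lo \<le> int g * k" using k1 gp by (simp add: div_less_iff_int)
    show "int g dvd int g * k" by simp
  qed
  have inj: "inj_on (\<lambda>k. int g * k) A" for A using g by (auto simp: inj_on_def)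
  have "card {x::int. lo \<le> x \<and> x \<le> hi \<and> int g dvd x} = card {(lo - 1) div int g + 1 .. hi div int g}"
    unfolding eq by (rule card_image[OF inj])
  moreover have "(lo - 1) div int g \<le> hi div int g" using lh gp by (simp add: zdiv_mono1)
  ultimately show ?thesis by simp
qed

definition AA :: "nat \<times> nat \<Rightarrow> int" where "AA X = int (snd X) - int (fst X) - 1"
definition oo :: "nat \<Rightarrow> nat \<Rightarrow> nat \<times> nat \<Rightarrow> int" where "oo n g X = (int n + 1) * (AA X div int g)"
definition PP :: "nat \<Rightarrow> nat \<times> nat \<Rightarrow> int" where "PP g X = AA X mod int g + 1"
definition QQ :: "nat \<Rightarrow> nat \<Rightarrow> nat \<times> nat \<Rightarrow> int" where "QQ n g X = phi n g (int (snd X)) - oo n g X"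

lemma Fobj_int:
  assumes g: "0 < g"
  shows "int (fst (Fobj n g X)) = PP g X" "int (snd (Fobj n g X)) = QQ n g X"
proof -
  obtain r s where X: "X = (r, s)" by fastforce
  have gp: "int g > 0" using g by simp
  have c: "int (card {s'::int. int s - int r \<le> s' \<and> s' \<le> int s \<and> int g dvd s'}) = int s div int g - (int s - int r - 1) div int g"
    using card_mult_int[OF g, of "int s - int r" "int s"] by simp
  have p: "0 \<le> (int s - int r - 1) mod int g + 1" using gp by (simp add: add_nonneg_nonneg)
  show "int (fst (Fobj n g X)) = PP g X"
    unfolding Fobj_def PP_def AA_def X Let_def using p by simp
  define C where "C = card {s'::int. int s - int r \<le> s' \<and> s' \<le> int s \<and> int g dvd s'}"
  have "int (snd (Fobj n g X)) = int (s mod g) + int C * (int n + 1)"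
    unfolding Fobj_def X Let_def C_def by (simp add: algebra_simps)
  also have "\<dots> = int s mod int g + (int s div int g - (int s - int r - 1) div int g) * (int n + 1)"
    using c unfolding C_def by (simp add: of_nat_mod)
  also have "\<dots> = QQ n g X" unfolding QQ_def oo_def phi_def AA_def X by (simp add: algebra_simps)
  finally show "int (snd (Fobj n g X)) = QQ n g X" .
qed

lemma PP_bounds: "0 < g \<Longrightarrow> 1 \<le> PP g X \<and> PP g X \<le> int g"
  unfolding PP_def by (simp add: add1_zle_eq pos_mod_bound)


lemma sum_ind:
  assumes "finite S"
  shows "(\<Sum>l\<in>S. (if l = c \<and> P l then (1::'k::field) else 0) * f l) = (if c \<in> S \<and> P c then f c else 0)"
proof -
  have "(\<Sum>l\<in>S. (if l = c \<and> P l then (1::'k) else 0) * f l) = (\<Sum>l\<in>S. if l = c then (if P c then f c else 0) else 0)"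
    by (rule sum.cong) auto
  also have "\<dots> = (if c \<in> S then (if P c then f c else 0) else 0)" using assms by (simp add: sum.delta)
  finally show ?thesis by simp
qed

lemma sum_ind2:
  assumes "finite S"
  shows "(\<Sum>l\<in>S. f l * (if l = c \<and> P l then (1::'k::field) else 0)) = (if c \<in> S \<and> P c then f c else 0)"
  using sum_ind[OF assms, of c P f] by (simp add: mult.commute)

lemma mm_left:
  "mat_mult (p', q') (Rep n g p' q' a) (M::'k::field mat) x y =
    (if a < g then (if 1 \<le> x \<and> (x - 1) mod (n+1) = a \<and> p' \<le> x - 1 \<and> x - 1 < q' then M (x - 1) y else 0)
     else (if (x + 1) mod (n+1) = (a + 1) mod (n+1) \<and> p' < x + 1 \<and> x + 1 \<le> q' then M (x + 1) y else 0))"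
proof (cases "a < g")
  case True
  have "mat_mult (p', q') (Rep n g p' q' a) M x y =
     (\<Sum>l\<in>{p'..q'}. (if l = x - 1 \<and> (1 \<le> x \<and> l mod (n+1) = a \<and> p' \<le> l \<and> l < q') then (1::'k) else 0) * M l y)"
    unfolding mat_mult_def Rep_def using True by (intro sum.cong) auto
  also have "\<dots> = (if 1 \<le> x \<and> (x - 1) mod (n+1) = a \<and> p' \<le> x - 1 \<and> x - 1 < q' then M (x - 1) y else 0)"
    by (subst sum_ind) auto
  finally show ?thesis using True by simp
next
  case False
  have "mat_mult (p', q') (Rep n g p' q' a) M x y =
     (\<Sum>l\<in>{p'..q'}. (if l = x + 1 \<and> (l mod (n+1) = (a+1) mod (n+1) \<and> p' < l \<and> l \<le> q') then (1::'k) else 0) * M l y)"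
    unfolding mat_mult_def Rep_def using False by (intro sum.cong) auto
  also have "\<dots> = (if (x + 1) mod (n+1) = (a + 1) mod (n+1) \<and> p' < x + 1 \<and> x + 1 \<le> q' then M (x + 1) y else 0)"
    by (subst sum_ind) auto
  finally show ?thesis using False by simp
qed

lemma mm_right:
  "mat_mult (p, q) (M::'k::field mat) (Rep n g p q a) x y =
    (if a < g then (if y mod (n+1) = a \<and> p \<le> y \<and> y < q then M x (y + 1) else 0)
     else (if y mod (n+1) = (a + 1) mod (n+1) \<and> p < y \<and> y \<le> q then M x (y - 1) else 0))"
proof (cases "a < g")
  case True
  have "mat_mult (p, q) M (Rep n g p q a) x y =
     (\<Sum>l\<in>{p..q}. M x l * (if l = y + 1 \<and> (y mod (n+1) = a \<and> p \<le> y \<and> y < q) then (1::'k) else 0))"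
    unfolding mat_mult_def Rep_def using True by (intro sum.cong) auto
  also have "\<dots> = (if y mod (n+1) = a \<and> p \<le> y \<and> y < q then M x (y + 1) else 0)"
    by (subst sum_ind2) auto
  finally show ?thesis using True by simp
next
  case False
  have "mat_mult (p, q) M (Rep n g p q a) x y =
     (\<Sum>l\<in>{p..q}. M x l * (if l = y - 1 \<and> (y mod (n+1) = (a+1) mod (n+1) \<and> p < y \<and> y \<le> q) then (1::'k) else 0))"
    unfolding mat_mult_def Rep_def using False by (intro sum.cong) auto
  also have "\<dots> = (if y mod (n+1) = (a + 1) mod (n+1) \<and> p < y \<and> y \<le> q then M x (y - 1) else 0)"
    by (subst sum_ind2) auto
  finally show ?thesis using False by simp
qed


lemma modpred: "1 \<le> (y::nat) \<Longrightarrow> a \<le> n \<Longrightarrow> y mod (n+1) = (a+1) mod (n+1) \<Longrightarrow> (y - 1) mod (n+1) = a"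
proof -
  assume a: "1 \<le> y" "a \<le> n" "y mod (n+1) = (a+1) mod (n+1)"
  obtain z where y: "y = Suc z" using a(1) by (cases y) auto
  have zl: "z mod (n+1) < n+1" by simp
  show ?thesis using a zl unfolding y by (auto simp: mod_Suc split: if_splits)
qed

lemma modeq: "int x = int y + d \<Longrightarrow> (int n + 1) dvd d \<Longrightarrow> x mod (n+1) = y mod (n+1)"
  by (metis Suc_eq_plus1 add.commute add_diff_cancel_right' dvd_nat_abs_iff
    int_ops(4) mod_eq_iff_dvd_symdiff_nat)

definition goodI :: "nat \<Rightarrow> nat \<Rightarrow> nat \<times> nat \<Rightarrow> bool" where
  "goodI n g V = (1 \<le> fst V \<and> (fst V - 1) mod (n+1) < g \<and> snd V mod (n+1) < g)"

definition Em :: "nat \<times> nat \<Rightarrow> nat \<times> nat \<Rightarrow> int \<Rightarrow> 'k::field mat" where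
  "Em V W d = (\<lambda>x y. if fst V \<le> y \<and> int y + d \<le> int (snd W) \<and> int x = int y + d then 1 else 0)"

lemma Em_HomK:
  assumes gV: "goodI n g (pV, qV)" and gW: "goodI n g (pW, qW)"
    and dv: "(int n + 1) dvd d" and d1: "int pW - int pV \<le> d" and d2: "int qW - int qV \<le> d"
  shows "(Em (pV, qV) (pW, qW) d :: 'k::field mat) \<in> HomK n g (pV, qV) (pW, qW)"
proof -
  let ?E = "Em (pV, qV) (pW, qW) d :: 'k mat"
  have supp: "\<forall>i j. ?E i j \<noteq> 0 \<longrightarrow> pV \<le> j \<and> j \<le> qV \<and> pW \<le> i \<and> i \<le> qW \<and> i mod (n+1) = j mod (n+1)"
  proof (intro allI impI)
    fix i j assume "?E i j \<noteq> 0"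
    then have h: "pV \<le> j" "int j + d \<le> int qW" "int i = int j + d" unfolding Em_def by (auto split: if_splits)
    then show "pV \<le> j \<and> j \<le> qV \<and> pW \<le> i \<and> i \<le> qW \<and> i mod (n+1) = j mod (n+1)"
      using d1 d2 modeq[OF h(3) dv] by linarith
  qed
  have eqs: "mat_mult (pW, qW) (Rep n g pW qW a) ?E = mat_mult (pV, qV) ?E (Rep n g pV qV a)" if an: "a \<le> n" for a
  proof (rule ext, rule ext)
    fix x y
    show "mat_mult (pW, qW) (Rep n g pW qW a) ?E x y = mat_mult (pV, qV) ?E (Rep n g pV qV a) x y"
    proof (cases "a < g")
      case True
      have "(1 \<le> x \<and> (x - 1) mod (n+1) = a \<and> pW \<le> x - 1 \<and> x - 1 < qW \<and>
              (pV \<le> y \<and> int y + d \<le> int qW \<and> int (x - 1) = int y + d))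
          = (y mod (n+1) = a \<and> pV \<le> y \<and> y < qV \<and>
              (pV \<le> y + 1 \<and> int (y + 1) + d \<le> int qW \<and> int x = int (y + 1) + d))"
      proof (cases "int x = int y + 1 + d")
        case xy: True
        show ?thesis
        proof (cases "x = 0")
          case True
          then show ?thesis using xy d1 gW unfolding goodI_def by auto
        next
          case False
          then have x1: "int (x - 1) = int y + d" "1 \<le> x" using xy by auto
          have "(x - 1) mod (n+1) = y mod (n+1)" using modeq[OF x1(1) dv] .
          then show ?thesis using xy x1 d1 d2 by auto
        qed
      next
        case False
        then show ?thesis by auto
      qed
      moreover have "mat_mult (pW, qW) (Rep n g pW qW a) ?E x y = (if (1 \<le> x \<and> (x - 1) mod (n+1) = a \<and> pW \<le> x - 1 \<and> x - 1 < qW \<and>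
              (pV \<le> y \<and> int y + d \<le> int qW \<and> int (x - 1) = int y + d)) then 1 else 0)"
        unfolding mm_left Em_def using True by (simp only: if_True if_False fst_conv snd_conv) auto
      moreover have "mat_mult (pV, qV) ?E (Rep n g pV qV a) x y = (if (y mod (n+1) = a \<and> pV \<le> y \<and> y < qV \<and>
              (pV \<le> y + 1 \<and> int (y + 1) + d \<le> int qW \<and> int x = int (y + 1) + d)) then 1 else 0)"
        unfolding mm_right Em_def using True by (simp only: if_True if_False fst_conv snd_conv) auto
      ultimately show ?thesis by simp
    next
      case False
      have "((x + 1) mod (n+1) = (a + 1) mod (n+1) \<and> pW < x + 1 \<and> x + 1 \<le> qW \<and>
              (pV \<le> y \<and> int y + d \<le> int qW \<and> int (x + 1) = int y + d))
          = (y mod (n+1) = (a + 1) mod (n+1) \<and> pV < y \<and> y \<le> qV \<and>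
              (pV \<le> y - 1 \<and> int (y - 1) + d \<le> int qW \<and> int x = int (y - 1) + d))"
      proof (cases "int x + 1 = int y + d")
        case xy: True
        show ?thesis
        proof
          assume L: "(x + 1) mod (n+1) = (a + 1) mod (n+1) \<and> pW < x + 1 \<and> x + 1 \<le> qW \<and>
              (pV \<le> y \<and> int y + d \<le> int qW \<and> int (x + 1) = int y + d)"
          have m: "(x + 1) mod (n+1) = y mod (n+1)" using modeq[of "x+1" y d n] xy dv by simp
          have y1: "1 \<le> y" using L gV unfolding goodI_def by auto
          have ym: "y mod (n+1) = (a+1) mod (n+1)" using L m by simp
          have "(y - 1) mod (n+1) = a" using modpred[OF y1 an ym] .
          then have "pV \<noteq> y" using gV False unfolding goodI_def by auto
          then show "y mod (n+1) = (a + 1) mod (n+1) \<and> pV < y \<and> y \<le> qV \<and>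
              (pV \<le> y - 1 \<and> int (y - 1) + d \<le> int qW \<and> int x = int (y - 1) + d)"
            using L ym y1 d2 xy by auto
        next
          assume R: "y mod (n+1) = (a + 1) mod (n+1) \<and> pV < y \<and> y \<le> qV \<and>
              (pV \<le> y - 1 \<and> int (y - 1) + d \<le> int qW \<and> int x = int (y - 1) + d)"
          have y1: "1 \<le> y" using R by auto
          have ym: "(y - 1) mod (n+1) = a" using modpred[OF y1 an] R by simp
          have xm: "x mod (n+1) = (y - 1) mod (n+1)" using modeq[of x "y - 1" d n] R dv by simp
          have xq: "x \<noteq> qW" using xm ym gW False unfolding goodI_def by auto
          have "(x + 1) mod (n+1) = y mod (n+1)" using modeq[of "x+1" y d n] xy dv by simp
          with xq show "(x + 1) mod (n+1) = (a + 1) mod (n+1) \<and> pW < x + 1 \<and> x + 1 \<le> qW \<and>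
              (pV \<le> y \<and> int y + d \<le> int qW \<and> int (x + 1) = int y + d)"
            using R xy d1 y1 by (auto simp: of_nat_diff)
        qed
      next
        case False
        then show ?thesis by auto
      qed
      moreover have "mat_mult (pW, qW) (Rep n g pW qW a) ?E x y = (if ((x + 1) mod (n+1) = (a + 1) mod (n+1) \<and> pW < x + 1 \<and> x + 1 \<le> qW \<and>
              (pV \<le> y \<and> int y + d \<le> int qW \<and> int (x + 1) = int y + d)) then 1 else 0)"
        unfolding mm_left Em_def using False by (simp only: if_True if_False fst_conv snd_conv) auto
      moreover have "mat_mult (pV, qV) ?E (Rep n g pV qV a) x y = (if (y mod (n+1) = (a + 1) mod (n+1) \<and> pV < y \<and> y \<le> qV \<and>
              (pV \<le> y - 1 \<and> int (y - 1) + d \<le> int qW \<and> int x = int (y - 1) + d)) then 1 else 0)"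
        unfolding mm_right Em_def using False by (simp only: if_True if_False fst_conv snd_conv) auto
      ultimately show ?thesis by simp
    qed
  qed
  show ?thesis unfolding HomK_def using supp eqs by auto
qed


lemma mat_mult_lincomb_right:
  "mat_mult pq A (\<lambda>l j. \<Sum>x\<in>S. c x * B x l j) = (\<lambda>i j. \<Sum>x\<in>S. c x * mat_mult pq A (B x) i j)"
  unfolding mat_mult_def
  by (rule ext, rule ext) (simp add: sum_distrib_left mult_ac sum.swap[of _ S])

lemma mat_mult_lincomb_left:
  "mat_mult pq (\<lambda>i l. \<Sum>x\<in>S. c x * B x i l) A = (\<lambda>i j. \<Sum>x\<in>S. c x * mat_mult pq (B x) A i j)"
  unfolding mat_mult_def
  by (rule ext, rule ext) (simp add: sum_distrib_left sum_distrib_right mult_ac sum.swap[of _ S])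

lemma HomK_lincomb:
  assumes "\<forall>x\<in>S. M x \<in> HomK n g V W"
  shows "(\<lambda>i j. \<Sum>x\<in>S. c x * M x i j) \<in> HomK n g V W"
proof -
  have supp: "\<forall>i j. (\<Sum>x\<in>S. c x * M x i j) \<noteq> 0 \<longrightarrow> fst V \<le> j \<and> j \<le> snd V \<and> fst W \<le> i \<and> i \<le> snd W
                        \<and> i mod (n+1) = j mod (n+1)"
  proof (intro allI impI)
    fix i j assume "(\<Sum>x\<in>S. c x * M x i j) \<noteq> 0"
    then obtain x where "x \<in> S" "c x * M x i j \<noteq> 0" by (meson sum.not_neutral_contains_not_neutral)
    then have "M x i j \<noteq> 0" "M x \<in> HomK n g V W" using assms by auto
    then show "fst V \<le> j \<and> j \<le> snd V \<and> fst W \<le> i \<and> i \<le> snd W \<and> i mod (n+1) = j mod (n+1)"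
      unfolding HomK_def by auto
  qed
  have "mat_mult W (Rep n g (fst W) (snd W) a) (\<lambda>i j. \<Sum>x\<in>S. c x * M x i j)
      = mat_mult V (\<lambda>i j. \<Sum>x\<in>S. c x * M x i j) (Rep n g (fst V) (snd V) a)" if "a \<le> n" for a
  proof -
    have e: "\<forall>x\<in>S. mat_mult W (Rep n g (fst W) (snd W) a) (M x) = mat_mult V (M x) (Rep n g (fst V) (snd V) a)"
      using assms that unfolding HomK_def by auto
    show ?thesis unfolding mat_mult_lincomb_right mat_mult_lincomb_left
      using e by (intro ext sum.cong) auto
  qed
  then show ?thesis unfolding HomK_def using supp by auto
qed

lemma HomK_diff:
  assumes "M1 \<in> HomK n g V W" "M2 \<in> HomK n g V W"
  shows "(\<lambda>i j. M1 i j - M2 i j) \<in> HomK n g V W"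
proof -
  let ?c = "\<lambda>b::bool. if b then (1::'a) else -1"
  let ?M = "\<lambda>b::bool. if b then M1 else M2"
  have "(\<lambda>i j. \<Sum>x\<in>UNIV. ?c x * ?M x i j) \<in> HomK n g V W"
    by (rule HomK_lincomb) (use assms in auto)
  moreover have "(\<lambda>i j. \<Sum>x\<in>UNIV. ?c x * ?M x i j) = (\<lambda>i j. M1 i j - M2 i j)"
    by (simp add: UNIV_bool)
  ultimately show ?thesis by simp
qed


lemma HomK_E1:
  assumes M: "M \<in> HomK n g (pV, qV) (pW, qW)" and um: "u mod (n+1) < g"
    and dv: "(int n + 1) dvd d" and k: "int k = int u + d"
  shows "(if pW \<le> k \<and> k < qW then M k u else 0) = (if pV \<le> u \<and> u < qV then M (k+1) (u+1) else 0)"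
proof -
  let ?a = "u mod (n+1)"
  have an: "?a \<le> n" by (simp add: less_Suc_eq_le)
  have eq: "mat_mult (pW, qW) (Rep n g pW qW ?a) M = mat_mult (pV, qV) M (Rep n g pV qV ?a)"
    using M an unfolding HomK_def by auto
  have km: "k mod (n+1) = ?a" using modeq[OF k dv] .
  have "mat_mult (pW, qW) (Rep n g pW qW ?a) M (k+1) u = (if pW \<le> k \<and> k < qW then M k u else 0)"
    unfolding mm_left using um km by simp
  moreover have "mat_mult (pV, qV) M (Rep n g pV qV ?a) (k+1) u = (if pV \<le> u \<and> u < qV then M (k+1) (u+1) else 0)"
    unfolding mm_right using um by simp
  ultimately show ?thesis using eq by metis
qed

lemma HomK_E2:
  assumes M: "M \<in> HomK n g (pV, qV) (pW, qW)" and um: "\<not> u mod (n+1) < g"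
    and dv: "(int n + 1) dvd d" and k: "int k = int u + d"
  shows "(if pW \<le> k \<and> k < qW then M (k+1) (u+1) else 0) = (if pV \<le> u \<and> u < qV then M k u else 0)"
proof -
  let ?a = "u mod (n+1)"
  have an: "?a \<le> n" by (simp add: less_Suc_eq_le)
  have eq: "mat_mult (pW, qW) (Rep n g pW qW ?a) M = mat_mult (pV, qV) M (Rep n g pV qV ?a)"
    using M an unfolding HomK_def by auto
  have km: "k mod (n+1) = ?a" using modeq[OF k dv] .
  have k1: "(k + 1) mod (n+1) = (?a + 1) mod (n+1)" using km by (metis mod_Suc_eq Suc_eq_plus1)
  have u1: "(u + 1) mod (n+1) = (?a + 1) mod (n+1)" by (metis mod_Suc_eq Suc_eq_plus1)
  have "mat_mult (pW, qW) (Rep n g pW qW ?a) M k (u+1) = (if pW \<le> k \<and> k < qW then M (k+1) (u+1) else 0)"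
    unfolding mm_left using um k1 by auto
  moreover have "mat_mult (pV, qV) M (Rep n g pV qV ?a) k (u+1) = (if pV \<le> u \<and> u < qV then M k u else 0)"
    unfolding mm_right using um u1 by auto
  ultimately show ?thesis using eq by metis
qed

lemma HomK_supp:
  assumes "M \<in> HomK n g (pV, qV) (pW, qW)" "M i j \<noteq> 0"
  shows "pV \<le> j \<and> j \<le> qV \<and> pW \<le> i \<and> i \<le> qW \<and> i mod (n+1) = j mod (n+1)"
  using assms unfolding HomK_def by auto

lemma HomK_zero:
  assumes gV: "goodI n g (pV, qV)" and gW: "goodI n g (pW, qW)"
    and M: "M \<in> HomK n g (pV, qV) (pW, qW)"
    and z: "\<And>d. (int n + 1) dvd d \<Longrightarrow> int pW - int pV \<le> d \<Longrightarrow> int qW - int qV \<le> d \<Longrightarrow> int pV + d \<le> int qW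
              \<Longrightarrow> M (nat (int pV + d)) pV = 0"
  shows "M x0 y0 = 0"
proof (rule ccontr)
  assume nz: "M x0 y0 \<noteq> 0"
  define d where "d = int x0 - int y0"
  have s0: "pV \<le> y0 \<and> y0 \<le> qV \<and> pW \<le> x0 \<and> x0 \<le> qW \<and> x0 mod (n+1) = y0 mod (n+1)"
    using HomK_supp[OF M nz] .
  have dv: "(int n + 1) dvd d" unfolding d_def using s0
    by (metis mod_eq_dvd_iff of_nat_Suc of_nat_mod Suc_eq_plus1 add.commute)
  define Q where "Q u = (0 \<le> int u + d \<and> M (nat (int u + d)) u \<noteq> 0)" for u
  have Qsupp: "pV \<le> u \<and> u \<le> qV \<and> pW \<le> nat (int u + d) \<and> nat (int u + d) \<le> qW" if "Q u" for u
    using HomK_supp[OF M] that unfolding Q_def by blast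
  have Qy0: "Q y0" unfolding Q_def d_def using nz by simp
  have down: "Q pV"
  proof (rule inc_induct[of pV y0 Q])
    show "pV \<le> y0" using s0 by simp
    show "Q y0" by (rule Qy0)
  next
    fix u assume u: "pV \<le> u" "u < y0" and QS: "Q (Suc u)"
    define k where "k = nat (int u + d)"
    have sS: "pW \<le> nat (int (Suc u) + d)" "nat (int (Suc u) + d) \<le> qW" using Qsupp[OF QS] by auto
    have gW1: "1 \<le> pW" using gW unfolding goodI_def by simp
    have k0: "0 \<le> int u + d" using sS gW1 by linarith
    have k: "int k = int u + d" unfolding k_def using k0 by simp
    have kS: "nat (int (Suc u) + d) = k + 1" using k by linarith
    have Mk1: "M (k+1) (u+1) \<noteq> 0" using QS kS unfolding Q_def by simp
    have uq: "u < qV" using u s0 by linarith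
    show "Q u"
    proof (cases "u mod (n+1) < g")
      case True
      from HomK_E1[OF M True dv k] u uq Mk1 have "M k u \<noteq> 0" by (auto split: if_splits)
      then show ?thesis unfolding Q_def k_def using k0 by simp
    next
      case False
      have "pW \<le> k"
      proof (rule ccontr)
        assume "\<not> pW \<le> k"
        then have "k + 1 = pW" using sS kS by linarith
        then have "(pW - 1) mod (n+1) = u mod (n+1)" using modeq[OF k dv] by (metis add_diff_cancel_right')
        then show False using gW False unfolding goodI_def by simp
      qed
      moreover have "k < qW" using sS kS by linarith
      ultimately have "M k u \<noteq> 0" using HomK_E2[OF M False dv k] u uq Mk1 by (auto split: if_splits)
      then show ?thesis unfolding Q_def k_def using k0 by simp
    qed
  qed
  have sp: "pV \<le> qV" "pW \<le> nat (int pV + d)" "nat (int pV + d) \<le> qW" using Qsupp[OF down] by auto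
  have d0: "0 \<le> int pV + d" using down unfolding Q_def by simp
  have up: "int qW - int qV \<le> d"
  proof (rule ccontr)
    assume nu: "\<not> int qW - int qV \<le> d"
    have "Q qV"
    proof (rule dec_induct[of pV qV Q])
      show "pV \<le> qV" by (rule sp(1))
      show "Q pV" by (rule down)
    next
      fix u assume u: "pV \<le> u" "u < qV" and Qu: "Q u"
      define k where "k = nat (int u + d)"
      have k: "int k = int u + d" unfolding k_def using Qu unfolding Q_def by simp
      have Mk: "M k u \<noteq> 0" using Qu unfolding Q_def k_def by simp
      have kpw: "pW \<le> k" using Qsupp[OF Qu] unfolding k_def by simp
      have kq: "k < qW" using k u nu by linarith
      have "M (k+1) (u+1) \<noteq> 0"
      proof (cases "u mod (n+1) < g")
        case True
        from HomK_E1[OF M True dv k] u kpw kq Mk show ?thesis by (auto split: if_splits)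
      next
        case False
        from HomK_E2[OF M False dv k] u kpw kq Mk show ?thesis by (auto split: if_splits)
      qed
      moreover have "nat (int (Suc u) + d) = k + 1" using k by linarith
      ultimately show "Q (Suc u)" unfolding Q_def using k by simp
    qed
    then obtain k where k: "int k = int qV + d" and Mk: "M k qV \<noteq> 0" unfolding Q_def
      by (metis nat_eq_iff2)
    have kpw: "pW \<le> k" using HomK_supp[OF M Mk] by simp
    have kq: "k < qW" using k nu by linarith
    have qm: "qV mod (n+1) < g" using gV unfolding goodI_def by simp
    from HomK_E1[OF M qm dv k] kpw kq Mk show False by (auto split: if_splits)
  qed
  have "M (nat (int pV + d)) pV = 0"
    by (rule z[OF dv]) (use sp d0 up in linarith)+
  then show False using down unfolding Q_def by simp
qed


definition Dset :: "nat \<Rightarrow> nat \<times> nat \<Rightarrow> nat \<times> nat \<Rightarrow> int set" where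
  "Dset n V W = {d. (int n + 1) dvd d \<and> int (fst W) - int (fst V) \<le> d \<and> int (snd W) - int (snd V) \<le> d
                   \<and> int (fst V) + d \<le> int (snd W)}"

lemma Dset_finite: "finite (Dset n V W)"
  by (rule finite_subset[of _ "{int (fst W) - int (fst V) .. int (snd W) - int (fst V)}"]) (auto simp: Dset_def)

lemma HomK_repr:
  assumes gV: "goodI n g (pV, qV)" and gW: "goodI n g (pW, qW)"
    and M: "M \<in> HomK n g (pV, qV) (pW, qW)"
  shows "M = (\<lambda>x y. \<Sum>d\<in>Dset n (pV, qV) (pW, qW). M (nat (int pV + d)) pV * Em (pV, qV) (pW, qW) d x y)"
proof -
  let ?D = "Dset n (pV, qV) (pW, qW)"
  let ?R = "(\<lambda>x y. \<Sum>d\<in>?D. M (nat (int pV + d)) pV * Em (pV, qV) (pW, qW) d x y)"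
  have R: "?R \<in> HomK n g (pV, qV) (pW, qW)"
  proof (rule HomK_lincomb[where S="?D" and c="\<lambda>d. M (nat (int pV + d)) pV" and M="\<lambda>d. Em (pV, qV) (pW, qW) d", simplified], intro ballI)
    fix d assume "d \<in> ?D"
    then have h: "(int n + 1) dvd d" "int pW - int pV \<le> d" "int qW - int qV \<le> d" unfolding Dset_def by auto
    show "Em (pV, qV) (pW, qW) d \<in> HomK n g (pV, qV) (pW, qW)"
      by (rule Em_HomK[OF gV gW h])
  qed
  have MR: "(\<lambda>i j. M i j - ?R i j) \<in> HomK n g (pV, qV) (pW, qW)" by (rule HomK_diff[OF M R])
  have z: "M x y - ?R x y = 0" for x y
  proof (rule HomK_zero[OF gV gW MR, of x y])
    fix d assume h: "(int n + 1) dvd d" "int pW - int pV \<le> d" "int qW - int qV \<le> d" "int pV + d \<le> int qW"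
    have dD: "d \<in> ?D" using h unfolding Dset_def by auto
    have pos: "0 \<le> int pV + d" using h(2) by linarith
    have "?R (nat (int pV + d)) pV = (\<Sum>d'\<in>?D. if d' = d then M (nat (int pV + d)) pV else 0)"
    proof (rule sum.cong)
      fix d' assume d': "d' \<in> ?D"
      have "int pV + d' \<le> int qW" using d' unfolding Dset_def by auto
      then show "M (nat (int pV + d')) pV * Em (pV, qV) (pW, qW) d' (nat (int pV + d)) pV =
          (if d' = d then M (nat (int pV + d)) pV else 0)"
        unfolding Em_def using pos by auto
    qed simp
    also have "\<dots> = M (nat (int pV + d)) pV" using dD Dset_finite by (simp add: sum.delta')
    finally show "M (nat (int pV + d)) pV - ?R (nat (int pV + d)) pV = 0" by simp
  qed
  have "M x y = ?R x y" for x y using z[of x y] by (simp only: right_minus_eq)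
  then show ?thesis by (intro ext)
qed


lemma dmu: "0 < (g::int) \<Longrightarrow> 0 \<le> r \<Longrightarrow> r < g \<Longrightarrow> (g*q + r) div g = q \<and> (g*q + r) mod g = r"
proof -
  assume a: "0 < g" "0 \<le> r" "r < g"
  have "(r + q * g) div g = q + r div g" using a by simp
  moreover have "(r + q * g) mod g = r mod g" by simp
  ultimately show ?thesis using a by (simp add: add.commute mult.commute div_pos_pos_trivial mod_pos_pos_trivial)
qed

lemma pred_divmod:
  assumes g: "0 < (g::int)"
  shows "(a - 1) div g = (if a mod g = 0 then a div g - 1 else a div g)"
    "(a - 1) mod g = (if a mod g = 0 then g - 1 else a mod g - 1)"
proof -
  have a: "a = g * (a div g) + a mod g" by simp
  have m: "0 \<le> a mod g" "a mod g < g" using g by auto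
  show "(a - 1) div g = (if a mod g = 0 then a div g - 1 else a div g)"
  proof (cases "a mod g = 0")
    case True
    have e: "a - 1 = g * (a div g - 1) + (g - 1)" using a True by (simp add: algebra_simps)
    have d: "(g * (a div g - 1) + (g - 1)) div g = a div g - 1 \<and> (g * (a div g - 1) + (g - 1)) mod g = g - 1"
      by (rule dmu) (use g in auto)
    show ?thesis using d True unfolding e[symmetric] by simp
  next
    case False
    have e: "a - 1 = g * (a div g) + (a mod g - 1)" using a by (simp add: algebra_simps)
    have d: "(g * (a div g) + (a mod g - 1)) div g = a div g \<and> (g * (a div g) + (a mod g - 1)) mod g = a mod g - 1"
      by (rule dmu) (use g m False in auto)
    show ?thesis using d False unfolding e[symmetric] by simp
  qed
  show "(a - 1) mod g = (if a mod g = 0 then g - 1 else a mod g - 1)"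
  proof (cases "a mod g = 0")
    case True
    have e: "a - 1 = g * (a div g - 1) + (g - 1)" using a True by (simp add: algebra_simps)
    have d: "(g * (a div g - 1) + (g - 1)) div g = a div g - 1 \<and> (g * (a div g - 1) + (g - 1)) mod g = g - 1"
      by (rule dmu) (use g in auto)
    show ?thesis using d True unfolding e[symmetric] by simp
  next
    case False
    have e: "a - 1 = g * (a div g) + (a mod g - 1)" using a by (simp add: algebra_simps)
    have d: "(g * (a div g) + (a mod g - 1)) div g = a div g \<and> (g * (a div g) + (a mod g - 1)) mod g = a mod g - 1"
      by (rule dmu) (use g m False in auto)
    show ?thesis using d False unfolding e[symmetric] by simp
  qed
qed


fun npi :: "arr list \<Rightarrow> nat" where
  "npi [] = 0" | "npi (Pi r s # w) = Suc (npi w)" | "npi (Rho r s # w) = npi w"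
fun nrho :: "arr list \<Rightarrow> nat" where
  "nrho [] = 0" | "nrho (Pi r s # w) = nrho w" | "nrho (Rho r s # w) = Suc (nrho w)"

definition dd :: "nat \<Rightarrow> nat \<Rightarrow> nat \<times> nat \<Rightarrow> nat \<Rightarrow> int" where
  "dd n g X i = oo n g X - (int n + 1) * ((AA X - int i) div int g)"
definition hh :: "nat \<Rightarrow> nat \<Rightarrow> nat \<times> nat \<Rightarrow> nat \<Rightarrow> int" where
  "hh n g X j = phi n g (int (snd X) - int j) - oo n g X"
definition EE :: "nat \<Rightarrow> nat \<Rightarrow> nat \<times> nat \<Rightarrow> nat \<Rightarrow> nat \<Rightarrow> 'k::field mat" where
  "EE n g X i j = (\<lambda>a b. if PP g X \<le> int b \<and> int b \<le> hh n g X j \<and> int a = int b + dd n g X i then 1 else 0)"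

lemma shift_dm: "0 < g \<Longrightarrow> (a + int g * k) div int g = a div int g + k \<and> (a + int g * k) mod int g = a mod int g"
  by simp

lemma hh_le_QQ: "0 < g \<Longrightarrow> g \<le> n + 1 \<Longrightarrow> hh n g X j \<le> QQ n g X"
  unfolding hh_def QQ_def using phi_mono[where x="int (snd X) - int j" and y="int (snd X)"] by simp

lemma AA_pi: "0 < g \<Longrightarrow> AA (r + 1, splus g s) = AA (r, s) + int g * (- (int s div int g))"
proof -
  assume g: "0 < g"
  have "int s = int g * (int s div int g) + int s mod int g" by simp
  then show ?thesis unfolding AA_def splus_def by (simp add: of_nat_mod algebra_simps)
qed

lemma pi_step:
  fixes r s :: nat
  assumes g: "0 < g" "g \<le> n + 1"
  defines "X \<equiv> (r + 1, splus g s)" and "Z \<equiv> (r, s)"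
  shows "PP g X = PP g Z" "dd n g X i = dd n g Z i" "hh n g X (Suc j) = hh n g Z j" "QQ n g Z \<le> QQ n g X"
proof -
  define k where "k = - (int s div int g)"
  have A: "AA X = AA Z + int g * k" unfolding X_def Z_def k_def using AA_pi[OF g(1)] by simp
  have o: "oo n g X = oo n g Z + (int n + 1) * k" unfolding oo_def A using shift_dm[OF g(1)]
    by (simp add: algebra_simps)
  show "PP g X = PP g Z" unfolding PP_def A using shift_dm[OF g(1)] by simp
  have "(AA X - int i) div int g = (AA Z - int i) div int g + k"
    using shift_dm[OF g(1), of "AA Z - int i" k] A by (simp add: algebra_simps)
  then show "dd n g X i = dd n g Z i" unfolding dd_def o by (simp add: algebra_simps)
  have sp: "int (snd X) = int s + int g * k + 1" unfolding X_def k_def splus_def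
    using minus_mod_eq_mult_div[of "int s" "int g"] by (simp add: of_nat_mod algebra_simps)
  have "phi n g (int (snd X) - int (Suc j)) = phi n g (int s - int j) + (int n + 1) * k"
    using phi_shift[OF g(1), where y="int s - int j" and k=k] sp by (simp add: algebra_simps)
  then show "hh n g X (Suc j) = hh n g Z j" unfolding hh_def o Z_def by simp
  have "phi n g (int (snd X)) = phi n g (int s + 1) + (int n + 1) * k"
    using phi_shift[OF g(1), where y="int s + 1" and k=k] sp by (simp add: algebra_simps)
  moreover have "phi n g (int s) \<le> phi n g (int s + 1)" using phi_mono[OF g] by simp
  ultimately show "QQ n g Z \<le> QQ n g X" unfolding QQ_def o Z_def by simp
qed

lemma rho_step:
  fixes r s :: nat
  assumes g: "0 < g" "g \<le> n"
  defines "X \<equiv> (r, s)" and "Z \<equiv> (r + 1, s)"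
    and "\<delta> \<equiv> (if PP g (r, s) = 1 then int n + 1 else 0)"
  shows "dd n g Z i + \<delta> = dd n g X (Suc i)" "hh n g Z j = hh n g X j + \<delta>" "QQ n g Z = QQ n g X + \<delta>"
    "PP g Z \<le> PP g X + \<delta>"
proof -
  have gp: "0 < int g" using g by simp
  have A: "AA Z = AA X - 1" unfolding AA_def X_def Z_def by simp
  have P1: "(PP g (r, s) = 1) = (AA X mod int g = 0)" unfolding PP_def X_def by simp
  have o: "oo n g Z = oo n g X - \<delta>"
    unfolding oo_def A \<delta>_def P1 pred_divmod[OF gp] by (simp add: algebra_simps)
  have o2: "oo n g (r + 1, s) = oo n g (r, s) - \<delta>" using o unfolding X_def Z_def by simp
  have e: "AA Z - int i = AA X - int (Suc i)" using A by (simp add: algebra_simps)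
  show "dd n g Z i + \<delta> = dd n g X (Suc i)" unfolding dd_def e using o by linarith
  show "hh n g Z j = hh n g X j + \<delta>" unfolding hh_def X_def Z_def snd_conv using o2 by linarith
  show "QQ n g Z = QQ n g X + \<delta>" unfolding QQ_def X_def Z_def snd_conv using o2 by linarith
  have m: "0 \<le> AA X mod int g" "AA X mod int g < int g" using gp by auto
  show "PP g Z \<le> PP g X + \<delta>"
    using g m unfolding \<delta>_def P1 PP_def A pred_divmod[OF gp] unfolding X_def by auto
qed


lemma mm_Farr_Pi:
  "mat_mult pq A (Farr n g (Pi r s) :: 'k::field mat) x y =
    (if fst pq \<le> y \<and> y \<le> snd pq \<and> fst (Fobj n g (r + 1, splus g s)) \<le> y \<and> y \<le> snd (Fobj n g (r + 1, splus g s))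
        \<and> fst (Fobj n g (r, s)) \<le> y \<and> y \<le> snd (Fobj n g (r, s)) then A x y else 0)"
proof -
  have "mat_mult pq A (Farr n g (Pi r s) :: 'k mat) x y = (\<Sum>l\<in>{fst pq..snd pq}. A x l *
     (if l = y \<and> (fst (Fobj n g (r + 1, splus g s)) \<le> y \<and> y \<le> snd (Fobj n g (r + 1, splus g s))
        \<and> fst (Fobj n g (r, s)) \<le> y \<and> y \<le> snd (Fobj n g (r, s))) then 1 else 0))"
    unfolding mat_mult_def Farr.simps Let_def by (intro sum.cong) auto
  then show ?thesis by (simp only:) (subst sum_ind2, auto)
qed

lemma mm_Farr_Rho:
  "mat_mult pq A (Farr n g (Rho r s) :: 'k::field mat) x y =
    (if fst pq \<le> (if fst (Fobj n g (r, s)) = 1 then y + (n + 1) else y) \<and> (if fst (Fobj n g (r, s)) = 1 then y + (n + 1) else y) \<le> snd pq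
        \<and> fst (Fobj n g (r, s)) \<le> y \<and> y \<le> snd (Fobj n g (r, s))
     then A x (if fst (Fobj n g (r, s)) = 1 then y + (n + 1) else y) else 0)"
proof -
  have "mat_mult pq A (Farr n g (Rho r s) :: 'k mat) x y = (\<Sum>l\<in>{fst pq..snd pq}. A x l *
     (if l = (if fst (Fobj n g (r, s)) = 1 then y + (n + 1) else y) \<and> (fst (Fobj n g (r, s)) \<le> y \<and> y \<le> snd (Fobj n g (r, s))) then 1 else 0))"
    unfolding mat_mult_def Farr.simps Let_def by (intro sum.cong) auto
  then show ?thesis by (simp only:) (subst sum_ind2, auto)
qed

lemma is_path_vertex: "is_path g m X w Y \<Longrightarrow> is_vertex g m X \<and> is_vertex g m Y"
proof (induction w arbitrary: X)
  case Nil then show ?case by auto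
next
  case (Cons a w)
  then show ?case using Cons.IH[of "tgt g a"] by (auto simp: is_arrow_def)
qed

lemma Fobj_le_iff:
  assumes "0 < g"
  shows "(fst (Fobj n g X) \<le> y) = (PP g X \<le> int y)" "(y \<le> snd (Fobj n g X)) = (int y \<le> QQ n g X)"
    "(fst (Fobj n g X) = 1) = (PP g X = 1)"
  using Fobj_int[OF assms, of n X] by linarith+

lemma Fobj_intP: "0 < g \<Longrightarrow> int (fst (Fobj n g X)) = PP g X" using Fobj_int by blast
lemma Fobj_intQ: "0 < g \<Longrightarrow> int (snd (Fobj n g X)) = QQ n g X" using Fobj_int by blast

lemma path_formula:
  assumes g: "0 < g" "g \<le> n"
  shows "is_path g m X w Y \<Longrightarrow> (Fpath n g X w :: 'k::field mat) = EE n g X (nrho w) (npi w)"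
proof (induction w arbitrary: X)
  case Nil
  have "dd n g X 0 = 0" unfolding dd_def oo_def by simp
  moreover have "hh n g X 0 = QQ n g X" unfolding hh_def QQ_def by simp
  ultimately show ?case unfolding EE_def Fpath.simps id_mat_def
    using Fobj_intP[OF g(1), of n X] Fobj_intQ[OF g(1), of n X] by (intro ext) auto
next
  case (Cons a w)
  show ?case
  proof (cases a)
    case (Pi r s)
    have X: "X = (r + 1, splus g s)" and pw: "is_path g m (r, s) w Y" using Cons.prems Pi by auto
    have IH: "(Fpath n g (r, s) w :: 'k mat) = EE n g (r, s) (nrho w) (npi w)" by (rule Cons.IH[OF pw])
    have gn: "g \<le> n + 1" using g by simp
    note ps = pi_step[OF g(1) gn, of r s]
    have hq: "hh n g (r, s) (npi w) \<le> QQ n g (r, s)" by (rule hh_le_QQ[OF g(1) gn])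
    have rhs: "(EE n g X (nrho (a # w)) (npi (a # w)) :: 'k mat) = EE n g (r, s) (nrho w) (npi w)"
      unfolding X Pi EE_def npi.simps nrho.simps ps by simp
    show ?thesis
    proof (rule ext, rule ext)
      fix x y
      have lhs: "(Fpath n g X (a # w) :: 'k mat) x y =
        (if fst (Fobj n g (r, s)) \<le> y \<and> y \<le> snd (Fobj n g (r, s)) \<and> fst (Fobj n g (r + 1, splus g s)) \<le> y \<and> y \<le> snd (Fobj n g (r + 1, splus g s))
        \<and> fst (Fobj n g (r, s)) \<le> y \<and> y \<le> snd (Fobj n g (r, s)) then EE n g (r, s) (nrho w) (npi w) x y else 0)"
        unfolding X Pi Fpath.simps tgt.simps mm_Farr_Pi IH by simp
      show "(Fpath n g X (a # w) :: 'k mat) x y = EE n g X (nrho (a # w)) (npi (a # w)) x y"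
      proof (cases "PP g (r, s) \<le> int y \<and> int y \<le> hh n g (r, s) (npi w)")
        case True
        have "fst (Fobj n g (r, s)) \<le> y \<and> y \<le> snd (Fobj n g (r, s)) \<and> fst (Fobj n g (r + 1, splus g s)) \<le> y \<and> y \<le> snd (Fobj n g (r + 1, splus g s))"
          unfolding Fobj_le_iff[OF g(1)] using True ps hq by simp
        then show ?thesis unfolding lhs rhs by simp
      next
        case False
        then have "(EE n g (r, s) (nrho w) (npi w) :: 'k mat) x y = 0" unfolding EE_def by auto
        then show ?thesis unfolding lhs rhs by simp
      qed
    qed
  next
    case (Rho r s)
    have X: "X = (r, s)" and pw: "is_path g m (r + 1, s) w Y" using Cons.prems Rho by auto
    have IH: "(Fpath n g (r + 1, s) w :: 'k mat) = EE n g (r + 1, s) (nrho w) (npi w)" by (rule Cons.IH[OF pw])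
    have gn: "g \<le> n + 1" using g by simp
    note rs = rho_step[OF g, of r s]
    have hq: "hh n g (r, s) (npi w) \<le> QQ n g (r, s)" by (rule hh_le_QQ[OF g(1) gn])
    define \<delta> where "\<delta> = (if PP g (r, s) = 1 then int n + 1 else 0)"
    define L where "L y = (if PP g (r, s) = 1 then y + (n + 1) else (y::nat))" for y
    have Li: "int (L y) = int y + \<delta>" for y unfolding L_def \<delta>_def by simp
    have rs': "dd n g (r + 1, s) (nrho w) + \<delta> = dd n g (r, s) (Suc (nrho w))"
      "hh n g (r + 1, s) (npi w) = hh n g (r, s) (npi w) + \<delta>"
      "QQ n g (r + 1, s) = QQ n g (r, s) + \<delta>" "PP g (r + 1, s) \<le> PP g (r, s) + \<delta>"
      using rs unfolding \<delta>_def by auto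
    show ?thesis
    proof (rule ext, rule ext)
      fix x y
      have lhs: "(Fpath n g X (a # w) :: 'k mat) x y =
        (if fst (Fobj n g (r + 1, s)) \<le> L y \<and> L y \<le> snd (Fobj n g (r + 1, s))
        \<and> fst (Fobj n g (r, s)) \<le> y \<and> y \<le> snd (Fobj n g (r, s)) then EE n g (r + 1, s) (nrho w) (npi w) x (L y) else 0)"
        unfolding X Rho Fpath.simps tgt.simps mm_Farr_Rho IH Fobj_le_iff(3)[OF g(1)] L_def by simp
      have rhs: "(EE n g X (nrho (a # w)) (npi (a # w)) :: 'k mat) x y =
         (if PP g (r, s) \<le> int y \<and> int y \<le> hh n g (r, s) (npi w) \<and> int x = int y + dd n g (r, s) (Suc (nrho w)) then 1 else 0)"
        unfolding X Rho EE_def npi.simps nrho.simps by simp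
      show "(Fpath n g X (a # w) :: 'k mat) x y = EE n g X (nrho (a # w)) (npi (a # w)) x y"
      proof (cases "PP g (r, s) \<le> int y \<and> int y \<le> hh n g (r, s) (npi w)")
        case True
        have c: "fst (Fobj n g (r + 1, s)) \<le> L y \<and> L y \<le> snd (Fobj n g (r + 1, s))
          \<and> fst (Fobj n g (r, s)) \<le> y \<and> y \<le> snd (Fobj n g (r, s))"
          unfolding Fobj_le_iff[OF g(1)] Li using True rs' hq by simp
        have "(EE n g (r + 1, s) (nrho w) (npi w) :: 'k mat) x (L y) =
          (if int x = int y + dd n g (r, s) (Suc (nrho w)) then 1 else 0)"
          unfolding EE_def Li using True rs' hq by auto
        then show ?thesis unfolding lhs rhs using c True by simp
      next
        case False
        have "(if fst (Fobj n g (r + 1, s)) \<le> L y \<and> L y \<le> snd (Fobj n g (r + 1, s))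
        \<and> fst (Fobj n g (r, s)) \<le> y \<and> y \<le> snd (Fobj n g (r, s)) then (EE n g (r + 1, s) (nrho w) (npi w) :: 'k mat) x (L y) else 0) = 0"
        proof (cases "PP g (r, s) \<le> int y")
          case True
          then have "\<not> int (L y) \<le> hh n g (r + 1, s) (npi w)" using False Li rs' by simp
          then show ?thesis unfolding EE_def by auto
        next
          case False
          then show ?thesis unfolding Fobj_le_iff[OF g(1)] by auto
        qed
        then have z: "(Fpath n g X (a # w) :: 'k mat) x y = 0" unfolding lhs .
        have "(EE n g X (nrho (a # w)) (npi (a # w)) :: 'k mat) x y = 0" unfolding rhs using False by auto
        then show ?thesis using z by simp
      qed
    qed
  qed
qed


lemma path_end:
  assumes g: "0 < g"
  shows "is_path g m X w Y \<Longrightarrow> int (fst Y) = int (fst X) + int (nrho w) - int (npi w)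
     \<and> int g dvd (int (snd X) - int (npi w) - int (snd Y))"
proof (induction w arbitrary: X)
  case Nil then show ?case by simp
next
  case (Cons a w)
  show ?case
  proof (cases a)
    case (Pi r s)
    have X: "X = (r + 1, splus g s)" and pw: "is_path g m (r, s) w Y" using Cons.prems Pi by auto
    note IH = Cons.IH[OF pw]
    have "int (splus g s) - 1 - int s = int g * (- (int s div int g))"
      unfolding splus_def using minus_mod_eq_mult_div[of "int s" "int g"] by (simp add: of_nat_mod algebra_simps)
    then have e2: "int (snd X) - int (npi (a # w)) - int (snd Y) = int g * (- (int s div int g)) + (int s - int (npi w) - int (snd Y))"
      unfolding X Pi by simp
    have "int g dvd (int (snd X) - int (npi (a # w)) - int (snd Y))"
      unfolding e2 using IH by (intro dvd_add) auto
    moreover have "int (fst Y) = int (fst X) + int (nrho (a # w)) - int (npi (a # w))"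
      using IH unfolding X Pi by simp
    ultimately show ?thesis by simp
  next
    case (Rho r s)
    have X: "X = (r, s)" and pw: "is_path g m (r + 1, s) w Y" using Cons.prems Rho by auto
    note IH = Cons.IH[OF pw]
    show ?thesis using IH unfolding X Rho by auto
  qed
qed

lemma QQ_PP_end:
  assumes g: "0 < g" and p: "is_path g m X w Y"
  shows "QQ n g Y = hh n g X (npi w) + dd n g X (nrho w)" "PP g Y = (AA X - int (nrho w)) mod int g + 1"
proof -
  obtain k where k: "int (snd X) - int (npi w) - int (snd Y) = int g * k" using path_end[OF g p] by (auto elim: dvdE)
  have r: "int (fst Y) = int (fst X) + int (nrho w) - int (npi w)" using path_end[OF g p] by simp
  have A: "AA Y = (AA X - int (nrho w)) + int g * (- k)" unfolding AA_def using k r by (simp add: algebra_simps)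
  have s: "int (snd X) - int (npi w) = int (snd Y) + int g * k" using k by simp
  have h1: "phi n g (int (snd X) - int (npi w)) = phi n g (int (snd Y)) + (int n + 1) * k"
    unfolding s by (rule phi_shift[OF g])
  have h2: "AA Y div int g = (AA X - int (nrho w)) div int g - k" unfolding A using shift_dm[OF g, of "AA X - int (nrho w)" "-k"] by simp
  show "QQ n g Y = hh n g X (npi w) + dd n g X (nrho w)"
    unfolding QQ_def hh_def dd_def oo_def h2 using h1 by (simp add: algebra_simps)
  show "PP g Y = (AA X - int (nrho w)) mod int g + 1" unfolding PP_def A using shift_dm[OF g, of "AA X - int (nrho w)" "-k"] by simp
qed

lemma goodI_Fobj:
  assumes g: "0 < g" "g \<le> n"
  shows "goodI n g (Fobj n g X)"
proof -
  have gp: "0 < int g" using g by simp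
  have P: "int (fst (Fobj n g X)) = AA X mod int g + 1" using Fobj_intP[OF g(1)] unfolding PP_def by simp
  have Q: "int (snd (Fobj n g X)) = int (snd X) mod int g + (int n + 1) * (int (snd X) div int g - AA X div int g)"
    using Fobj_intQ[OF g(1)] unfolding QQ_def phi_def oo_def by (simp add: algebra_simps)
  have m: "0 \<le> AA X mod int g" "AA X mod int g < int g" using gp by auto
  have "int (fst (Fobj n g X) - 1) = AA X mod int g" using P m by simp
  then have "int ((fst (Fobj n g X) - 1) mod (n + 1)) = AA X mod int g mod (int n + 1)"
    by (metis of_nat_Suc of_nat_mod Suc_eq_plus1 add.commute)
  also have "\<dots> = AA X mod int g" by (rule mod_pos_pos_trivial) (use m g in linarith)+
  finally have 1: "(fst (Fobj n g X) - 1) mod (n + 1) < g" using m by linarith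
  have "int ((snd (Fobj n g X)) mod (n + 1)) = int (snd (Fobj n g X)) mod (int n + 1)"
    by (metis of_nat_Suc of_nat_mod Suc_eq_plus1 add.commute)
  also have "\<dots> = int (snd X) mod int g mod (int n + 1)" unfolding Q by simp
  also have "\<dots> = int (snd X) mod int g" by (rule mod_pos_pos_trivial) (use g gp pos_mod_bound[of "int g" "int (snd X)"] pos_mod_sign[of "int g" "int (snd X)"] in linarith)+
  finally have 2: "(snd (Fobj n g X)) mod (n + 1) < g" using gp
    by (metis of_nat_less_iff of_nat_mod pos_mod_bound)
  have "1 \<le> fst (Fobj n g X)" using P m by linarith
  then show ?thesis unfolding goodI_def using 1 2 by auto
qed

lemma Fpath_Em:
  assumes g: "0 < g" "g \<le> n" and p: "is_path g m X w Y"
  shows "(Fpath n g X w :: 'k::field mat) = Em (Fobj n g X) (Fobj n g Y) (dd n g X (nrho w))"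
  unfolding path_formula[OF g p] EE_def Em_def Fobj_intP[OF g(1)] Fobj_le_iff[OF g(1)] Fobj_intQ[OF g(1)]
  unfolding QQ_PP_end(1)[OF g(1) p] by (intro ext) auto

lemma dd_bounds:
  assumes g: "0 < g" "g \<le> n" and p: "is_path g m X w Y"
  shows "(int n + 1) dvd dd n g X (nrho w)" "PP g Y - PP g X \<le> dd n g X (nrho w)"
    "QQ n g Y - QQ n g X \<le> dd n g X (nrho w)"
proof -
  show "(int n + 1) dvd dd n g X (nrho w)" unfolding dd_def oo_def by (simp add: right_diff_distrib[symmetric])
  have gn: "g \<le> n + 1" using g by simp
  have "phi n g (AA X - int (nrho w)) \<le> phi n g (AA X)" using phi_mono[OF g(1) gn] by simp
  then show "PP g Y - PP g X \<le> dd n g X (nrho w)"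
    unfolding QQ_PP_end(2)[OF g(1) p] unfolding PP_def dd_def oo_def phi_def by linarith
  show "QQ n g Y - QQ n g X \<le> dd n g X (nrho w)"
    unfolding QQ_PP_end(1)[OF g(1) p] using hh_le_QQ[OF g(1) gn] by simp
qed

lemma Fpath_HomK:
  assumes g: "0 < g" "g \<le> n" and p: "is_path g m X w Y"
  shows "(Fpath n g X w :: 'k::field mat) \<in> HomK n g (Fobj n g X) (Fobj n g Y)"
proof -
  have e: "Fobj n g X = (fst (Fobj n g X), snd (Fobj n g X))" "Fobj n g Y = (fst (Fobj n g Y), snd (Fobj n g Y))" by simp_all
  show ?thesis unfolding Fpath_Em[OF g p] using dd_bounds[OF g p] goodI_Fobj[OF g]
    by (subst e(1), subst e(2), subst e(1), subst e(2), intro Em_HomK)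
       (auto simp: Fobj_intP[OF g(1)] Fobj_intQ[OF g(1)])
qed

lemma valid_iff:
  assumes g: "0 < g" "g \<le> n"
  shows "(PP g X \<le> hh n g X j) = (j \<le> fst X)"
proof -
  have gn: "g \<le> n + 1" using g by simp
  have "PP g X = phi n g (AA X) + 1 - oo n g X" unfolding PP_def phi_def oo_def by simp
  then have "(PP g X \<le> hh n g X j) = (phi n g (AA X) < phi n g (int (snd X) - int j))"
    unfolding hh_def by linarith
  also have "\<dots> = (AA X < int (snd X) - int j)" by (rule phi_less_iff[OF g(1) gn])
  also have "\<dots> = (j \<le> fst X)" unfolding AA_def by linarith
  finally show ?thesis .
qed


lemma ideal_0: "(\<lambda>w. 0) \<in> (ideal g m X Y :: (arr list \<Rightarrow> 'k::field) set)"
  unfolding ideal_def mem_Collect_eq by (rule exI[of _ 0]) auto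

lemma ideal_add:
  assumes "h1 \<in> (ideal g m X Y :: (arr list \<Rightarrow> 'k::field) set)" "h2 \<in> ideal g m X Y"
  shows "(\<lambda>w. h1 w + h2 w) \<in> ideal g m X Y"
proof -
  obtain N1 a1 G1 where 1: "\<forall>i<(N1::nat). G1 i \<in> ideal_gens g m X Y" "h1 = (\<lambda>w. \<Sum>i<N1. a1 i * G1 i w)"
    using assms(1) unfolding ideal_def mem_Collect_eq by (elim exE conjE) auto
  obtain N2 a2 G2 where 2: "\<forall>i<(N2::nat). G2 i \<in> ideal_gens g m X Y" "h2 = (\<lambda>w. \<Sum>i<N2. a2 i * G2 i w)"
    using assms(2) unfolding ideal_def mem_Collect_eq by (elim exE conjE) auto
  define a where "a i = (if i < N1 then a1 i else a2 (i - N1))" for i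
  define G where "G i = (if i < N1 then G1 i else G2 (i - N1))" for i
  have "\<forall>i<N1 + N2. G i \<in> ideal_gens g m X Y" using 1 2 unfolding G_def by auto
  moreover have "(\<lambda>w. h1 w + h2 w) = (\<lambda>w. \<Sum>i<N1 + N2. a i * G i w)"
  proof
    fix w
    have "(\<Sum>i<N1 + N2. a i * G i w) = (\<Sum>i<N1. a i * G i w) + (\<Sum>i\<in>{N1..<N1 + N2}. a i * G i w)"
      by (simp add: lessThan_atLeast0 sum.atLeastLessThan_concat)
    also have "(\<Sum>i<N1. a i * G i w) = (\<Sum>i<N1. a1 i * G1 i w)" unfolding a_def G_def by simp
    also have "(\<Sum>i\<in>{N1..<N1 + N2}. a i * G i w) = (\<Sum>i<N2. a2 i * G2 i w)"
    proof -
      have "(\<Sum>i\<in>{N1..<N1 + N2}. a i * G i w) = (\<Sum>i\<in>{0..<N2}. a (i + N1) * G (i + N1) w)"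
        by (subst sum.shift_bounds_nat_ivl[symmetric]) (simp add: add.commute)
      also have "\<dots> = (\<Sum>i<N2. a2 i * G2 i w)" unfolding a_def G_def by (simp add: lessThan_atLeast0)
      finally show ?thesis .
    qed
    finally show "h1 w + h2 w = (\<Sum>i<N1 + N2. a i * G i w)" using 1 2 by simp
  qed
  ultimately show ?thesis unfolding ideal_def mem_Collect_eq
    by (intro exI[of _ "N1 + N2"] exI[of _ a] exI[of _ G]) auto
qed

lemma ideal_smult:
  assumes "h \<in> (ideal g m X Y :: (arr list \<Rightarrow> 'k::field) set)"
  shows "(\<lambda>w. c * h w) \<in> ideal g m X Y"
proof -
  obtain N a G where 1: "\<forall>i<(N::nat). G i \<in> ideal_gens g m X Y" "h = (\<lambda>w. \<Sum>i<N. a i * G i w)"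
    using assms unfolding ideal_def mem_Collect_eq by (elim exE conjE) auto
  have "(\<lambda>w. c * h w) = (\<lambda>w. \<Sum>i<N. (c * a i) * G i w)" unfolding 1 by (simp add: sum_distrib_left mult.assoc)
  then show ?thesis unfolding ideal_def mem_Collect_eq using 1
    by (intro exI[of _ N] exI[of _ "\<lambda>i. c * a i"] exI[of _ G]) auto
qed

lemma ideal_diff:
  assumes "h1 \<in> (ideal g m X Y :: (arr list \<Rightarrow> 'k::field) set)" "h2 \<in> ideal g m X Y"
  shows "(\<lambda>w. h1 w - h2 w) \<in> ideal g m X Y"
  using ideal_add[OF assms(1) ideal_smult[OF assms(2), of "-1"]] by simp

lemma ideal_sum:
  assumes "finite S" "\<forall>x\<in>S. h x \<in> (ideal g m X Y :: (arr list \<Rightarrow> 'k::field) set)"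
  shows "(\<lambda>w. \<Sum>x\<in>S. c x * h x w) \<in> ideal g m X Y"
  using assms
proof (induction S rule: finite_induct)
  case empty then show ?case using ideal_0 by simp
next
  case (insert x F)
  have "(\<lambda>w. c x * h x w + (\<Sum>x\<in>F. c x * h x w)) \<in> ideal g m X Y"
    using insert by (intro ideal_add ideal_smult) auto
  then show ?case using insert by simp
qed

lemma gen_ideal: "G \<in> ideal_gens g m X Y \<Longrightarrow> G \<in> (ideal g m X Y :: (arr list \<Rightarrow> 'k::field) set)"
  unfolding ideal_def mem_Collect_eq by (rule exI[of _ 1], rule exI[of _ "\<lambda>_. 1"], rule exI[of _ "\<lambda>_. G"]) auto

definition pre :: "arr \<Rightarrow> (arr list \<Rightarrow> 'k::field) \<Rightarrow> arr list \<Rightarrow> 'k" where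
  "pre a h = (\<lambda>w. case w of [] \<Rightarrow> 0 | b # w' \<Rightarrow> if b = a then h w' else 0)"

lemma pre_pv: "pre a (path_vec w) = path_vec (a # w)"
  unfolding pre_def path_vec_def by (rule ext) (auto split: list.splits)

lemma pre_sandwich: "pre a (sandwich u \<rho> v) = sandwich (a # u) \<rho> v"
proof
  fix w
  show "pre a (sandwich u \<rho> v) w = sandwich (a # u) \<rho> v w"
  proof (cases w)
    case Nil then show ?thesis unfolding pre_def sandwich_def by simp
  next
    case (Cons b w')
    show ?thesis
    proof (cases "b = a")
      case True
      have "(\<exists>x. w' = u @ x @ v) = (\<exists>x. w = (a # u) @ x @ v)" using Cons True by simp
      moreover have "(THE x. w' = u @ x @ v) = (THE x. w = (a # u) @ x @ v)" using Cons True by simp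
      ultimately show ?thesis unfolding pre_def sandwich_def using Cons True by simp
    next
      case False
      then show ?thesis unfolding pre_def sandwich_def using Cons by auto
    qed
  qed
qed

lemma pre_lin: "pre a (\<lambda>w. \<Sum>i<N. c i * G i w) = (\<lambda>w. \<Sum>i<N. c i * pre a (G i) w)"
  unfolding pre_def by (rule ext) (auto split: list.splits)

lemma pre_diff: "pre a (\<lambda>w. h1 w - h2 w) = (\<lambda>w. pre a h1 w - pre a h2 w)"
  unfolding pre_def by (rule ext) (auto split: list.splits)

lemma pre_ideal:
  assumes a: "is_arrow g m a" and h: "h \<in> (ideal g m (tgt g a) Y :: (arr list \<Rightarrow> 'k::field) set)"
  shows "pre a h \<in> ideal g m (src g a) Y"
proof -
  obtain N c G where 1: "\<forall>i<(N::nat). G i \<in> ideal_gens g m (tgt g a) Y" "h = (\<lambda>w. \<Sum>i<N. c i * G i w)"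
    using h unfolding ideal_def mem_Collect_eq by (elim exE conjE) auto
  have "\<forall>i<N. pre a (G i) \<in> ideal_gens g m (src g a) Y"
  proof (intro allI impI)
    fix i assume "i < N"
    then obtain u \<rho> v A B where G: "G i = sandwich u \<rho> v" "(A, \<rho>, B) \<in> Rels g m" "is_path g m (tgt g a) u A"
      "is_path g m B v Y" using 1 unfolding ideal_gens_def mem_Collect_eq by blast
    have "is_path g m (src g a) (a # u) A" using G a by simp
    then show "pre a (G i) \<in> ideal_gens g m (src g a) Y" unfolding ideal_gens_def mem_Collect_eq G(1) pre_sandwich
      using G by blast
  qed
  then show ?thesis unfolding ideal_def mem_Collect_eq 1(2) pre_lin
    by (intro exI[of _ N] exI[of _ c] exI[of _ "\<lambda>i. pre a (G i)"]) auto
qed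


definition sminus :: "nat \<Rightarrow> nat \<Rightarrow> nat" where "sminus g s = (if s = 1 then g else s - 1)"

lemma splus_sminus: "1 \<le> s \<Longrightarrow> s \<le> g \<Longrightarrow> splus g (sminus g s) = s"
  unfolding splus_def sminus_def by (cases "s = 1") auto

lemma sminus_splus: "1 \<le> s \<Longrightarrow> s \<le> g \<Longrightarrow> sminus g (splus g s) = s"
  unfolding splus_def sminus_def by (cases "s = g") auto

lemma sminus_range: "1 \<le> s \<Longrightarrow> s \<le> g \<Longrightarrow> 1 \<le> sminus g s \<and> sminus g s \<le> g"
  unfolding sminus_def by auto

fun pis :: "nat \<Rightarrow> nat \<Rightarrow> nat \<times> nat \<Rightarrow> arr list" where
  "pis g 0 X = []"
| "pis g (Suc k) X = Pi (fst X - 1) (sminus g (snd X)) # pis g k (fst X - 1, sminus g (snd X))"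

fun pend :: "nat \<Rightarrow> nat \<Rightarrow> nat \<times> nat \<Rightarrow> nat \<times> nat" where
  "pend g 0 X = X"
| "pend g (Suc k) X = pend g k (fst X - 1, sminus g (snd X))"

fun rhos :: "nat \<Rightarrow> nat \<times> nat \<Rightarrow> arr list" where
  "rhos 0 X = []"
| "rhos (Suc k) X = Rho (fst X) (snd X) # rhos k (fst X + 1, snd X)"

definition canon :: "nat \<Rightarrow> nat \<times> nat \<Rightarrow> nat \<Rightarrow> nat \<Rightarrow> arr list" where
  "canon g X j i = pis g j X @ rhos i (pend g j X)"

lemma pend_fst: "fst (pend g k X) = fst X - k"
  by (induction k arbitrary: X) auto

lemma pend_snd: "snd (pend g k (a, b)) = snd (pend g k (a', b))"
  by (induction k arbitrary: a a' b) auto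

lemma pend_snd_range: "1 \<le> snd X \<Longrightarrow> snd X \<le> g \<Longrightarrow> 1 \<le> snd (pend g k X) \<and> snd (pend g k X) \<le> g"
  by (induction k arbitrary: X) (auto simp: sminus_def)

lemma pend_snd_cong:
  "1 \<le> snd X \<Longrightarrow> snd X \<le> g \<Longrightarrow> int g dvd (int (snd X) - int k - int (snd (pend g k X)))"
proof (induction k arbitrary: X)
  case 0 then show ?case by simp
next
  case (Suc k)
  define X' where "X' = (fst X - 1, sminus g (snd X))"
  have r: "1 \<le> snd X'" "snd X' \<le> g" using sminus_range[OF Suc.prems] unfolding X'_def by auto
  have IH: "int g dvd (int (snd X') - int k - int (snd (pend g k X')))" by (rule Suc.IH[OF r])
  have "int (snd X) - int (Suc k) - int (snd (pend g (Suc k) X)) =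
        (int (snd X) - 1 - int (snd X')) + (int (snd X') - int k - int (snd (pend g k X')))"
    unfolding X'_def by simp
  moreover have "int g dvd (int (snd X) - 1 - int (snd X'))"
    unfolding X'_def sminus_def using Suc.prems by (cases "snd X = 1") auto
  ultimately show ?case using IH by (metis dvd_add)
qed

lemma dvd_range_eq:
  fixes g :: nat
  assumes "1 \<le> a" "a \<le> g" "1 \<le> b" "b \<le> g" "int g dvd (int a - int b)"
  shows "a = b"
proof (rule ccontr)
  assume "a \<noteq> b"
  then have "0 < \<bar>int a - int b\<bar>" by simp
  moreover have "\<bar>int a - int b\<bar> < int g" using assms by auto
  moreover have "int g dvd \<bar>int a - int b\<bar>" using assms(5) by simp
  ultimately show False using zdvd_imp_le by fastforce
qed

lemma vertex_pred: "is_vertex g m (r, s) \<Longrightarrow> 1 \<le> r \<Longrightarrow> is_vertex g m (r - 1, sminus g s)"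
  unfolding is_vertex_def sminus_def by auto

lemma is_path_append: "is_path g m X (u @ v) Z = (\<exists>Y. is_path g m X u Y \<and> is_path g m Y v Z)"
proof (induction u arbitrary: X)
  case Nil
  then show ?case using is_path_vertex[of g m X v Z] by auto
next
  case (Cons a u)
  then show ?case by auto
qed

lemma pis_path: "is_vertex g m X \<Longrightarrow> k \<le> fst X \<Longrightarrow> is_path g m X (pis g k X) (pend g k X)"
proof (induction k arbitrary: X)
  case 0 then show ?case by simp
next
  case (Suc k)
  obtain r s where X: "X = (r, s)" by fastforce
  have r1: "1 \<le> r" using Suc.prems X by simp
  have s: "1 \<le> s" "s \<le> g" using Suc.prems(1) X unfolding is_vertex_def by auto
  have v: "is_vertex g m (r - 1, sminus g s)" using vertex_pred Suc.prems(1) r1 X by simp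
  have IH: "is_path g m (r - 1, sminus g s) (pis g k (r - 1, sminus g s)) (pend g k (r - 1, sminus g s))"
    using Suc.IH[OF v] Suc.prems X by simp
  have a: "is_arrow g m (Pi (r - 1) (sminus g s))" unfolding is_arrow_def using v Suc.prems(1) X r1
    by (simp add: splus_sminus[OF s])
  show ?case unfolding X using IH a r1 by (simp add: splus_sminus[OF s])
qed

lemma rhos_path: "is_vertex g m (fst Z + i, snd Z) \<Longrightarrow> is_path g m Z (rhos i Z) (fst Z + i, snd Z)"
proof (induction i arbitrary: Z)
  case 0 then show ?case by simp
next
  case (Suc i)
  have v1: "is_vertex g m (fst Z + 1 + i, snd Z)" using Suc.prems by (simp add: add.commute add.left_commute)
  have IH: "is_path g m (fst Z + 1, snd Z) (rhos i (fst Z + 1, snd Z)) (fst Z + 1 + i, snd Z)"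
    using Suc.IH[of "(fst Z + 1, snd Z)"] v1 by simp
  have "is_arrow g m (Rho (fst Z) (snd Z))" using Suc.prems unfolding is_arrow_def is_vertex_def by auto
  then show ?case using IH by (simp add: add.commute add.left_commute)
qed

lemma npi_append: "npi (u @ v) = npi u + npi v"
  by (induction u rule: npi.induct) auto
lemma nrho_append: "nrho (u @ v) = nrho u + nrho v"
  by (induction u rule: nrho.induct) auto
lemma npi_pis: "npi (pis g k X) = k" by (induction k arbitrary: X) auto
lemma nrho_pis: "nrho (pis g k X) = 0" by (induction k arbitrary: X) auto
lemma npi_rhos: "npi (rhos k X) = 0" by (induction k arbitrary: X) auto
lemma nrho_rhos: "nrho (rhos k X) = k" by (induction k arbitrary: X) auto
lemma npi_canon: "npi (canon g X j i) = j" unfolding canon_def by (simp add: npi_append npi_pis npi_rhos)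
lemma nrho_canon: "nrho (canon g X j i) = i" unfolding canon_def by (simp add: nrho_append nrho_pis nrho_rhos)

lemma canon_path:
  assumes X: "is_vertex g m X" and Y: "is_vertex g m Y" and j: "j \<le> fst X"
    and r: "int (fst Y) = int (fst X) + int i - int j"
    and s: "int g dvd (int (snd X) - int j - int (snd Y))"
  shows "is_path g m X (canon g X j i) Y"
proof -
  have sX: "1 \<le> snd X" "snd X \<le> g" and sY: "1 \<le> snd Y" "snd Y \<le> g" using X Y unfolding is_vertex_def by auto
  have p1: "is_path g m X (pis g j X) (pend g j X)" by (rule pis_path[OF X j])
  have e1: "fst (pend g j X) + i = fst Y" using r j pend_fst[of g j X] by simp
  have d: "int g dvd (int (snd (pend g j X)) - int (snd Y))"
    using dvd_diff[OF s pend_snd_cong[OF sX, of j]] by (simp add: algebra_simps)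
  have e2: "snd (pend g j X) = snd Y" using dvd_range_eq[OF _ _ sY d] pend_snd_range[OF sX, of j] by auto
  have "(fst (pend g j X) + i, snd (pend g j X)) = Y" using e1 e2 by (simp add: prod_eq_iff)
  then have p2: "is_path g m (pend g j X) (rhos i (pend g j X)) Y" using rhos_path[of g m "pend g j X" i] Y by simp
  show ?thesis unfolding canon_def is_path_append using p1 p2 by blast
qed

lemma sandwich_pv: "sandwich u (path_vec p) v = (path_vec (u @ p @ v) :: arr list \<Rightarrow> 'k::field)"
  unfolding sandwich_def path_vec_def by (rule ext) auto

lemma sandwich_pv2: "sandwich u (\<lambda>w. path_vec p1 w - path_vec p2 w) v =
   (\<lambda>w. path_vec (u @ p1 @ v) w - path_vec (u @ p2 @ v) w :: 'k::field)"
  unfolding sandwich_def path_vec_def by (rule ext) auto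


abbreviation pv :: "arr list \<Rightarrow> arr list \<Rightarrow> 'k::field" where "pv \<equiv> path_vec"

lemma ideal_eq_subst: "h \<in> ideal g m X Y \<Longrightarrow> h = h' \<Longrightarrow> h' \<in> ideal g m X Y" by simp

lemma comm:
  "is_path g m (r, s) (Rho r s # pis g k (r + 1, s) @ rest) Y \<Longrightarrow> k \<le> r + 1 \<Longrightarrow>
    (if k \<le> r then (\<lambda>w. pv (Rho r s # pis g k (r + 1, s) @ rest) w
                     - pv (pis g k (r, s) @ Rho (r - k) (snd (pend g k (r, s))) # rest) w)
                   \<in> (ideal g m (r, s) Y :: (arr list \<Rightarrow> 'k::field) set)
     else (pv (Rho r s # pis g k (r + 1, s) @ rest) :: arr list \<Rightarrow> 'k) \<in> ideal g m (r, s) Y)"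
proof (induction k arbitrary: r s)
  case 0
  have "(\<lambda>w. 0) \<in> (ideal g m (r, s) Y :: (arr list \<Rightarrow> 'k) set)" by (rule ideal_0)
  then show ?case by simp
next
  case (Suc k)
  define s' where "s' = sminus g s"
  have vX: "is_vertex g m (r, s)" using Suc.prems(1) by (auto simp: is_arrow_def)
  have sr: "1 \<le> s" "s \<le> g" using vX unfolding is_vertex_def by auto
  have ss': "splus g s' = s" unfolding s'_def by (rule splus_sminus[OF sr])
  have s'r: "1 \<le> s'" "s' \<le> g" unfolding s'_def using sminus_range[OF sr] by auto
  define T where "T = pis g k (r, s') @ rest"
  have P: "pis g (Suc k) (r + 1, s) @ rest = Pi r s' # T" unfolding T_def s'_def by simp
  have aR: "is_arrow g m (Rho r s)" and aP: "is_arrow g m (Pi r s')" and pT: "is_path g m (r, s') T Y"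
    using Suc.prems(1) unfolding P by (auto simp: ss')
  have gens: "sandwich [] \<rho> T \<in> ideal_gens g m (r, s) Y" if "((r, s), \<rho>, (r, s')) \<in> Rels g m" for \<rho> :: "arr list \<Rightarrow> 'k"
    unfolding ideal_gens_def mem_Collect_eq using that vX pT by (intro exI[of _ "[]"] exI[of _ \<rho>] exI[of _ T] exI[of _ "(r, s)"] exI[of _ "(r, s')"]) auto
  show ?case
  proof (cases r)
    case 0
    have k0: "k = 0" using Suc.prems(2) 0 by simp
    have "((0, splus g s'), pv [Rho 0 (splus g s'), Pi 0 s'], (0, s')) \<in> (Rels g m :: ((nat \<times> nat) \<times> (arr list \<Rightarrow> 'k) \<times> (nat \<times> nat)) set)"
      unfolding Rels_def
      apply (rule UnI2)
      apply (simp only: mem_Collect_eq)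
      apply (rule exI[of _ s'])
      using s'r by simp
    then have "((r, s), pv [Rho r s, Pi r s'], (r, s')) \<in> (Rels g m :: ((nat \<times> nat) \<times> (arr list \<Rightarrow> 'k) \<times> (nat \<times> nat)) set)"
      using 0 ss' by simp
    then have "sandwich [] (pv [Rho r s, Pi r s']) T \<in> (ideal g m (r, s) Y :: (arr list \<Rightarrow> 'k) set)"
      by (intro gen_ideal gens)
    then have "(pv (Rho r s # Pi r s' # T) :: arr list \<Rightarrow> 'k) \<in> ideal g m (r, s) Y" unfolding sandwich_pv by simp
    then show ?thesis using 0 P by (simp add: T_def)
  next
    case (Suc r')
    have vr': "is_vertex g m (r', s')" using vertex_pred[OF vX] Suc unfolding s'_def by simp
    have aP': "is_arrow g m (Pi r' s')" unfolding is_arrow_def using vr' vX Suc ss' by simp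
    have vrs': "is_vertex g m (r, s')" using aP unfolding is_arrow_def by simp
    have aR': "is_arrow g m (Rho r' s')" unfolding is_arrow_def using vr' vrs' Suc by simp
    have rel: "((r, s), (\<lambda>w. pv [Rho r s, Pi r s'] w - pv [Pi r' s', Rho r' s'] w), (r, s')) \<in> (Rels g m :: ((nat \<times> nat) \<times> (arr list \<Rightarrow> 'k) \<times> (nat \<times> nat)) set)"
    proof -
      have "((r' + 1, splus g s'), (\<lambda>w. pv [Rho (r'+1) (splus g s'), Pi (r'+1) s'] w - pv [Pi r' s', Rho r' s'] w), (r' + 1, s'))
          \<in> (Rels g m :: ((nat \<times> nat) \<times> (arr list \<Rightarrow> 'k) \<times> (nat \<times> nat)) set)"
        unfolding Rels_def
        apply (rule UnI1)
        apply (simp only: mem_Collect_eq)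
        apply (rule exI[of _ r'], rule exI[of _ s'])
        using s'r aR aP aP' aR' Suc ss' by simp
      then show ?thesis using Suc ss' by simp
    qed
    have G: "(\<lambda>w. pv (Rho r s # Pi r s' # T) w - pv (Pi r' s' # Rho r' s' # T) w) \<in> (ideal g m (r, s) Y :: (arr list \<Rightarrow> 'k) set)"
      using gen_ideal[OF gens[OF rel]] unfolding sandwich_pv2 by simp
    have T': "T = pis g k (r' + 1, s') @ rest" unfolding T_def Suc by simp
    have pIH: "is_path g m (r', s') (Rho r' s' # pis g k (r' + 1, s') @ rest) Y" using aR' pT T' Suc by simp
    have kle: "k \<le> r' + 1" using Suc.prems(2) Suc by simp
    note IH = Suc.IH[OF pIH kle]
    have srcP: "src g (Pi r' s') = (r, s)" using Suc ss' by simp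
    have tgtP: "tgt g (Pi r' s') = (r', s')" by simp
    show ?thesis
    proof (cases "k \<le> r'")
      case True
      have D: "(\<lambda>w. pv (Rho r' s' # pis g k (r' + 1, s') @ rest) w
                     - pv (pis g k (r', s') @ Rho (r' - k) (snd (pend g k (r', s'))) # rest) w)
                   \<in> (ideal g m (r', s') Y :: (arr list \<Rightarrow> 'k) set)" using IH True by simp
      have "pre (Pi r' s') (\<lambda>w. pv (Rho r' s' # pis g k (r' + 1, s') @ rest) w
                     - pv (pis g k (r', s') @ Rho (r' - k) (snd (pend g k (r', s'))) # rest) w)
                   \<in> (ideal g m (r, s) Y :: (arr list \<Rightarrow> 'k) set)"
        using pre_ideal[OF aP', of _ Y] D srcP by simp
      then have D': "(\<lambda>w. pv (Pi r' s' # Rho r' s' # T) w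
                     - pv (Pi r' s' # pis g k (r', s') @ Rho (r' - k) (snd (pend g k (r', s'))) # rest) w)
                   \<in> (ideal g m (r, s) Y :: (arr list \<Rightarrow> 'k) set)"
        unfolding pre_diff pre_pv T' by simp
      have "(\<lambda>w. (pv (Rho r s # Pi r s' # T) w - pv (Pi r' s' # Rho r' s' # T) w) +
               (pv (Pi r' s' # Rho r' s' # T) w
                     - pv (Pi r' s' # pis g k (r', s') @ Rho (r' - k) (snd (pend g k (r', s'))) # rest) w))
           \<in> (ideal g m (r, s) Y :: (arr list \<Rightarrow> 'k) set)"
        by (rule ideal_add[OF G D'])
      moreover have "pis g (Suc k) (r, s) = Pi r' s' # pis g k (r', s')" using Suc unfolding s'_def by simp
      moreover have "pend g (Suc k) (r, s) = pend g k (r', s')" using Suc unfolding s'_def by simp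
      ultimately show ?thesis using True Suc P by simp
    next
      case False
      then have kk: "k = r' + 1" using kle by simp
      have D: "(pv (Rho r' s' # pis g k (r' + 1, s') @ rest) :: arr list \<Rightarrow> 'k) \<in> ideal g m (r', s') Y"
        using IH False by simp
      have "pre (Pi r' s') (pv (Rho r' s' # pis g k (r' + 1, s') @ rest)) \<in> (ideal g m (r, s) Y :: (arr list \<Rightarrow> 'k) set)"
        using pre_ideal[OF aP', of _ Y] D srcP by simp
      then have D': "(pv (Pi r' s' # Rho r' s' # T) :: arr list \<Rightarrow> 'k) \<in> ideal g m (r, s) Y"
        unfolding pre_pv T' by simp
      have "(\<lambda>w. (pv (Rho r s # Pi r s' # T) w - pv (Pi r' s' # Rho r' s' # T) w) + pv (Pi r' s' # Rho r' s' # T) w)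
           \<in> (ideal g m (r, s) Y :: (arr list \<Rightarrow> 'k) set)"
        by (rule ideal_add[OF G D'])
      then have F: "(pv (Rho r s # Pi r s' # T) :: arr list \<Rightarrow> 'k) \<in> ideal g m (r, s) Y" by simp
      have nle: "\<not> Suc k \<le> r" using kk Suc by simp
      show ?thesis unfolding if_not_P[OF nle] P by (rule F)
    qed
  qed
qed


lemma canon_Pi: "1 \<le> s \<Longrightarrow> s \<le> g \<Longrightarrow> canon g (r + 1, splus g s) (Suc j) i = Pi r s # canon g (r, s) j i"
  unfolding canon_def by (simp add: sminus_splus)

lemma rw:
  assumes g: "0 < g"
  shows "is_path g m X w Y \<Longrightarrow>
    (if npi w \<le> fst X then (\<lambda>v. pv w v - pv (canon g X (npi w) (nrho w)) v) \<in> (ideal g m X Y :: (arr list \<Rightarrow> 'k::field) set)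
     else (pv w :: arr list \<Rightarrow> 'k) \<in> ideal g m X Y)"
proof (induction w arbitrary: X)
  case Nil
  have "(\<lambda>w. 0) \<in> (ideal g m X Y :: (arr list \<Rightarrow> 'k) set)" by (rule ideal_0)
  then show ?case unfolding canon_def by simp
next
  case (Cons a w)
  show ?case
  proof (cases a)
    case (Pi r s)
    have X: "X = (r + 1, splus g s)" and aa: "is_arrow g m (Pi r s)" and pw: "is_path g m (r, s) w Y"
      using Cons.prems Pi by auto
    have sr: "1 \<le> s" "s \<le> g" using is_path_vertex[OF pw] unfolding is_vertex_def by auto
    note IH = Cons.IH[OF pw]
    have src: "src g (Pi r s) = X" using X by simp
    show ?thesis
    proof (cases "npi w \<le> r")
      case True
      have D: "(\<lambda>v. pv w v - pv (canon g (r, s) (npi w) (nrho w)) v) \<in> (ideal g m (r, s) Y :: (arr list \<Rightarrow> 'k) set)"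
        using IH True by simp
      have "pre (Pi r s) (\<lambda>v. pv w v - pv (canon g (r, s) (npi w) (nrho w)) v) \<in> (ideal g m X Y :: (arr list \<Rightarrow> 'k) set)"
        using pre_ideal[OF aa] D src by fastforce
      then have "(\<lambda>v. pv (Pi r s # w) v - pv (canon g X (Suc (npi w)) (nrho w)) v) \<in> (ideal g m X Y :: (arr list \<Rightarrow> 'k) set)"
        unfolding pre_diff pre_pv X canon_Pi[OF sr] .
      then show ?thesis using True X Pi by simp
    next
      case False
      have D: "(pv w :: arr list \<Rightarrow> 'k) \<in> ideal g m (r, s) Y" using IH False by simp
      have "pre (Pi r s) (pv w) \<in> (ideal g m X Y :: (arr list \<Rightarrow> 'k) set)"
        using pre_ideal[OF aa] D src by fastforce
      then show ?thesis unfolding pre_pv using False X Pi by simp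
    qed
  next
    case (Rho r s)
    have X: "X = (r, s)" and aa: "is_arrow g m (Rho r s)" and pw: "is_path g m (r + 1, s) w Y"
      using Cons.prems Rho by auto
    note IH = Cons.IH[OF pw]
    have src: "src g (Rho r s) = X" using X by simp
    have npa: "npi (a # w) = npi w" "nrho (a # w) = Suc (nrho w)" using Rho by simp_all
    show ?thesis
    proof (cases "npi w \<le> r + 1")
      case True
      define j where "j = npi w"
      define i where "i = nrho w"
      define rest where "rest = rhos i (pend g j (r + 1, s))"
      have D: "(\<lambda>v. pv w v - pv (canon g (r + 1, s) j i) v) \<in> (ideal g m (r + 1, s) Y :: (arr list \<Rightarrow> 'k) set)"
        using IH True unfolding j_def i_def by simp
      have "pre (Rho r s) (\<lambda>v. pv w v - pv (canon g (r + 1, s) j i) v) \<in> (ideal g m X Y :: (arr list \<Rightarrow> 'k) set)"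
        using pre_ideal[OF aa] D src by fastforce
      then have D1: "(\<lambda>v. pv (Rho r s # w) v - pv (Rho r s # canon g (r + 1, s) j i) v) \<in> (ideal g m X Y :: (arr list \<Rightarrow> 'k) set)"
        unfolding pre_diff pre_pv .
      have vZ: "is_vertex g m (r + 1, s)" and vY: "is_vertex g m Y" using is_path_vertex[OF pw] by auto
      have pc: "is_path g m (r + 1, s) (canon g (r + 1, s) j i) Y"
        using canon_path[OF vZ vY] True path_end[OF g pw] unfolding j_def i_def by simp
      have pcomm: "is_path g m (r, s) (Rho r s # pis g j (r + 1, s) @ rest) Y"
        using aa pc unfolding canon_def rest_def by simp
      note C = comm[OF pcomm, where 'k='k] True[folded j_def]
      have pe: "pend g j (r + 1, s) = (fst (pend g j (r, s)) + 1, snd (pend g j (r, s)))" if "j \<le> r"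
        using pend_fst[of g j "(r + 1, s)"] pend_fst[of g j "(r, s)"] pend_snd[of g j "r + 1" s r] that
        by (simp add: prod_eq_iff)
      show ?thesis
      proof (cases "j \<le> r")
        case True
        have D2: "(\<lambda>w. pv (Rho r s # pis g j (r + 1, s) @ rest) w
                     - pv (pis g j (r, s) @ Rho (r - j) (snd (pend g j (r, s))) # rest) w)
                   \<in> (ideal g m (r, s) Y :: (arr list \<Rightarrow> 'k) set)"
          using C True by simp
        have ce: "pis g j (r, s) @ Rho (r - j) (snd (pend g j (r, s))) # rest = canon g X j (Suc i)"
          unfolding canon_def rest_def X using pe[OF True] pend_fst[of g j "(r, s)"] by simp
        have "(\<lambda>v. (pv (Rho r s # w) v - pv (Rho r s # canon g (r + 1, s) j i) v) +
                   (pv (Rho r s # pis g j (r + 1, s) @ rest) v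
                     - pv (pis g j (r, s) @ Rho (r - j) (snd (pend g j (r, s))) # rest) v))
             \<in> (ideal g m X Y :: (arr list \<Rightarrow> 'k) set)"
          by (rule ideal_add[OF D1]) (use D2 X in simp)
        then have "(\<lambda>v. pv (Rho r s # w) v - pv (canon g X j (Suc i)) v) \<in> (ideal g m X Y :: (arr list \<Rightarrow> 'k) set)"
          unfolding ce[symmetric] by (simp add: canon_def rest_def)
        then show ?thesis using True X Rho unfolding j_def i_def by simp
      next
        case False
        have D2: "(pv (Rho r s # pis g j (r + 1, s) @ rest) :: arr list \<Rightarrow> 'k) \<in> ideal g m (r, s) Y"
          using C False by simp
        have "(\<lambda>v. (pv (Rho r s # w) v - pv (Rho r s # canon g (r + 1, s) j i) v) +
                   pv (Rho r s # pis g j (r + 1, s) @ rest) v)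
             \<in> (ideal g m X Y :: (arr list \<Rightarrow> 'k) set)"
          by (rule ideal_add[OF D1]) (use D2 X in simp)
        then have "(pv (Rho r s # w) :: arr list \<Rightarrow> 'k) \<in> ideal g m X Y"
          by (simp add: canon_def rest_def)
        then show ?thesis using False X Rho unfolding j_def i_def by simp
      qed
    next
      case False
      have D: "(pv w :: arr list \<Rightarrow> 'k) \<in> ideal g m (r + 1, s) Y" using IH False by simp
      have "pre (Rho r s) (pv w) \<in> (ideal g m X Y :: (arr list \<Rightarrow> 'k) set)"
        using pre_ideal[OF aa] D src by fastforce
      then show ?thesis unfolding pre_pv using False X Rho by simp
    qed
  qed
qed


lemma Fobj_inj:
  assumes g: "0 < g" "g \<le> n" and X: "is_vertex g m X" and Y: "is_vertex g m Y" and e: "Fobj n g X = Fobj n g Y"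
  shows "X = Y"
proof -
  have gp: "0 < int g" using g by simp
  have P: "PP g X = PP g Y" and Q: "QQ n g X = QQ n g Y" using e Fobj_intP[OF g(1), of n] Fobj_intQ[OF g(1), of n] by metis+
  have Qf: "QQ n g Z = int (snd Z) mod int g + (int n + 1) * (int (snd Z) div int g - AA Z div int g)" for Z
    unfolding QQ_def phi_def oo_def by (simp add: algebra_simps)
  have Qm: "QQ n g Z mod (int n + 1) = int (snd Z) mod int g" for Z
  proof -
    have "QQ n g Z mod (int n + 1) = int (snd Z) mod int g mod (int n + 1)" unfolding Qf by simp
    also have "\<dots> = int (snd Z) mod int g"
      by (rule mod_pos_pos_trivial) (use g gp pos_mod_bound[of "int g" "int (snd Z)"] pos_mod_sign[of "int g" "int (snd Z)"] in linarith)+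
    finally show ?thesis .
  qed
  have sm: "int (snd X) mod int g = int (snd Y) mod int g" using Qm[of X] Qm[of Y] Q by simp
  have sX: "1 \<le> snd X" "snd X \<le> g" and sY: "1 \<le> snd Y" "snd Y \<le> g" using X Y unfolding is_vertex_def by auto
  have "int g dvd (int (snd X) - int (snd Y))" using sm by (simp add: mod_eq_dvd_iff)
  then have ss: "snd X = snd Y" using dvd_range_eq[OF sX sY] by simp
  have "(int n + 1) * (AA X div int g) = (int n + 1) * (AA Y div int g)" using Q unfolding Qf ss by simp
  then have ad: "AA X div int g = AA Y div int g" by simp
  have am: "AA X mod int g = AA Y mod int g" using P unfolding PP_def by simp
  have "AA X = AA Y" using ad am by (metis div_mult_mod_eq)
  then have "fst X = fst Y" unfolding AA_def using ss by simp
  then show ?thesis using ss by (simp add: prod_eq_iff)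
qed

lemma dd_nonneg: "0 < g \<Longrightarrow> 0 \<le> dd n g X i"
  unfolding dd_def oo_def
  by (simp add: right_diff_distrib[symmetric] zdiv_mono1)

lemma dd_inj:
  assumes g: "0 < g" and p1: "is_path g m X w1 Y" and p2: "is_path g m X w2 Y"
    and e: "dd n g X (nrho w1) = dd n g X (nrho w2)"
  shows "nrho w1 = nrho w2"
proof -
  have m: "(AA X - int (nrho w1)) mod int g = (AA X - int (nrho w2)) mod int g"
    using QQ_PP_end(2)[OF g p1] QQ_PP_end(2)[OF g p2] by simp
  have d: "(AA X - int (nrho w1)) div int g = (AA X - int (nrho w2)) div int g"
    using e unfolding dd_def by simp
  have "AA X - int (nrho w1) = AA X - int (nrho w2)" using m d by (metis div_mult_mod_eq)
  then show ?thesis by simp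
qed

lemma surj_arith:
  assumes g: "0 < g" "g \<le> n" and dD: "d \<in> Dset n (Fobj n g X) (Fobj n g Y)"
  shows "\<exists>i j. j \<le> fst X \<and> int (fst Y) = int (fst X) + int i - int j
      \<and> int g dvd (int (snd X) - int j - int (snd Y)) \<and> dd n g X i = d"
proof -
  have gp: "0 < int g" using g by simp
  have gn: "g \<le> n + 1" using g by simp
  have D: "(int n + 1) dvd d" "PP g Y - PP g X \<le> d" "QQ n g Y - QQ n g X \<le> d" "PP g X + d \<le> QQ n g Y"
    using dD unfolding Dset_def Fobj_intP[OF g(1)] Fobj_intQ[OF g(1)] by auto
  obtain e where e: "d = (int n + 1) * e" using D(1) by (auto elim: dvdE)
  define T where "T = AA X div int g - e"
  define w where "w = T - AA Y div int g"
  define iI where "iI = AA X - (AA Y + int g * w)"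
  define jI where "jI = int (snd X) - (int (snd Y) + int g * w)"
  have oX: "oo n g X = (int n + 1) * (AA X div int g)" unfolding oo_def by simp
  have pAY: "phi n g (AA Y + int g * w) = AA Y mod int g + (int n + 1) * T"
    unfolding phi_shift[OF g(1)] unfolding phi_def w_def by (simp add: algebra_simps)
  have NT: "(int n + 1) * T = oo n g X - d" unfolding T_def oX e by (simp add: algebra_simps)
  have pAX: "phi n g (AA X) = AA X mod int g + oo n g X" unfolding phi_def oo_def by simp
  have "phi n g (AA Y + int g * w) \<le> phi n g (AA X)"
    using D(2) unfolding pAY pAX NT PP_def by simp
  then have i0: "0 \<le> iI" unfolding iI_def phi_le_iff[OF g(1) gn] by simp
  have psY: "phi n g (int (snd Y) + int g * w) = QQ n g Y + oo n g X - d"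
  proof -
    have "phi n g (int (snd Y) + int g * w) = phi n g (int (snd Y)) + (int n + 1) * T - (int n + 1) * (AA Y div int g)"
      unfolding phi_shift[OF g(1)] w_def by (simp add: algebra_simps)
    then show ?thesis unfolding NT QQ_def oo_def by simp
  qed
  have psX: "phi n g (int (snd X)) = QQ n g X + oo n g X" unfolding QQ_def by simp
  have "phi n g (int (snd Y) + int g * w) \<le> phi n g (int (snd X))"
    using D(3) unfolding psY psX by simp
  then have j0: "0 \<le> jI" unfolding jI_def phi_le_iff[OF g(1) gn] by simp
  have PX: "PP g X = phi n g (AA X) + 1 - oo n g X" unfolding PP_def pAX by simp
  have "phi n g (AA X) < phi n g (int (snd Y) + int g * w)"
    using D(4) unfolding psY PX by simp
  then have "AA X < int (snd Y) + int g * w" unfolding phi_less_iff[OF g(1) gn] .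
  then have jr: "jI \<le> int (fst X)" unfolding jI_def AA_def by simp
  define i where "i = nat iI"
  define j where "j = nat jI"
  have ii: "int i = iI" and jj: "int j = jI" unfolding i_def j_def using i0 j0 by simp_all
  have "j \<le> fst X" using jr jj by simp
  moreover have "int (fst Y) = int (fst X) + int i - int j"
    unfolding ii jj iI_def jI_def using AA_def[of X] AA_def[of Y] by simp
  moreover have "int g dvd (int (snd X) - int j - int (snd Y))"
    unfolding jj jI_def by simp
  moreover have "dd n g X i = d"
  proof -
    have "(AA X - int i) div int g = AA Y div int g + w"
      unfolding ii iI_def using shift_dm[OF g(1), of "AA Y" w] by simp
    then show ?thesis unfolding dd_def using NT unfolding w_def by (simp add: algebra_simps)
  qed
  ultimately show ?thesis by blast
qed


definition FF :: "nat \<Rightarrow> nat \<Rightarrow> nat \<times> nat \<Rightarrow> arr list set \<Rightarrow> (arr list \<Rightarrow> 'k::field) \<Rightarrow> 'k mat" where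
  "FF n g X S c = (\<lambda>i j. \<Sum>w\<in>S. c w * Fpath n g X w i j)"

lemma Fmor_FF:
  assumes "finite S" "{w. c w \<noteq> 0} \<subseteq> S"
  shows "Fmor n g X c = FF n g X S c"
  unfolding Fmor_def FF_def
  by (intro ext sum.mono_neutral_left) (use assms in auto)

lemma FF_lin: "FF n g X S (\<lambda>w. \<Sum>k<N. a k * G k w) = (\<lambda>i j. \<Sum>k<N. a k * FF n g X S (G k) i j)"
  unfolding FF_def by (intro ext) (simp add: sum_distrib_left sum_distrib_right mult_ac sum.swap[of _ S])

lemma gen_props:
  assumes g: "0 < g" "g \<le> n" and G: "G \<in> (ideal_gens g m X Y :: (arr list \<Rightarrow> 'k::field) set)"
  shows "finite {w. G w \<noteq> 0} \<and> Fmor n g X G = (\<lambda>i j. 0)"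
proof -
  obtain u \<rho> v A B where G: "G = sandwich u \<rho> v" "(A, \<rho>, B) \<in> Rels g m" "is_path g m X u A" "is_path g m B v Y"
    using G unfolding ideal_gens_def by blast
  have "(\<exists>r s. A = (r + 1, splus g s) \<and> B = (r + 1, s) \<and>
      \<rho> = (\<lambda>w. pv [Rho (r+1) (splus g s), Pi (r+1) s] w - pv [Pi r s, Rho r s] w) \<and>
      1 \<le> s \<and> s \<le> g \<and> is_arrow g m (Rho (r+1) (splus g s)) \<and> is_arrow g m (Pi (r+1) s) \<and>
      is_arrow g m (Pi r s) \<and> is_arrow g m (Rho r s))
    \<or> (\<exists>s. A = (0, splus g s) \<and> B = (0, s) \<and> \<rho> = pv [Rho 0 (splus g s), Pi 0 s])"
    using G(2) unfolding Rels_def by auto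
  then show ?thesis
  proof (elim disjE)
    assume "\<exists>r s. A = (r + 1, splus g s) \<and> B = (r + 1, s) \<and>
      \<rho> = (\<lambda>w. pv [Rho (r+1) (splus g s), Pi (r+1) s] w - pv [Pi r s, Rho r s] w) \<and>
      1 \<le> s \<and> s \<le> g \<and> is_arrow g m (Rho (r+1) (splus g s)) \<and> is_arrow g m (Pi (r+1) s) \<and>
      is_arrow g m (Pi r s) \<and> is_arrow g m (Rho r s)"
    then obtain r s where rs: "A = (r + 1, splus g s)" "B = (r + 1, s)"
      "\<rho> = (\<lambda>w. pv [Rho (r+1) (splus g s), Pi (r+1) s] w - pv [Pi r s, Rho r s] w)"
      "1 \<le> s" "s \<le> g" "is_arrow g m (Rho (r+1) (splus g s))" "is_arrow g m (Pi (r+1) s)"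
      "is_arrow g m (Pi r s)" "is_arrow g m (Rho r s)" by blast
    define w1 where "w1 = u @ [Rho (r+1) (splus g s), Pi (r+1) s] @ v"
    define w2 where "w2 = u @ [Pi r s, Rho r s] @ v"
    have Ge: "G = (\<lambda>w. pv w1 w - pv w2 w)" unfolding G(1) rs(3) sandwich_pv2 w1_def w2_def ..
    have ne: "w1 \<noteq> w2" unfolding w1_def w2_def by simp
    have vB: "is_vertex g m (r + 1, s)" using is_path_vertex[OF G(4)] rs by simp
    have p1: "is_path g m X w1 Y" unfolding w1_def is_path_append using G(3,4) rs vB by auto
    have p2: "is_path g m X w2 Y" unfolding w2_def is_path_append using G(3,4) rs vB by auto
    have fin: "finite {w. G w \<noteq> 0}" by (rule finite_subset[of _ "{w1, w2}"]) (auto simp: Ge path_vec_def)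
    have "Fmor n g X G = FF n g X {w1, w2} G" by (rule Fmor_FF) (auto simp: Ge path_vec_def)
    also have "\<dots> = (\<lambda>i j. Fpath n g X w1 i j - Fpath n g X w2 i j)"
      unfolding FF_def Ge using ne by (simp add: path_vec_def)
    also have "\<dots> = (\<lambda>i j. 0)"
      unfolding path_formula[OF g p1] path_formula[OF g p2]
      unfolding w1_def w2_def by (simp add: npi_append nrho_append)
    finally show ?thesis using fin by simp
  next
    assume "\<exists>s. A = (0, splus g s) \<and> B = (0, s) \<and> \<rho> = pv [Rho 0 (splus g s), Pi 0 s]"
    then obtain s where rs: "A = (0, splus g s)" "B = (0, s)" "\<rho> = pv [Rho 0 (splus g s), Pi 0 s]" by blast
    define w1 where "w1 = u @ [Rho 0 (splus g s), Pi 0 s] @ v"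
    have Ge: "G = pv w1" unfolding G(1) rs(3) sandwich_pv w1_def ..
    have p1: "is_path g m X w1 Y" unfolding w1_def is_path_append
    proof -
      have vA: "is_vertex g m (0, splus g s)" and vB: "is_vertex g m (0, s)"
        using is_path_vertex[OF G(3)] is_path_vertex[OF G(4)] rs by auto
      have "is_vertex g m (1, splus g s)" using vA unfolding is_vertex_def by auto
      then show "\<exists>Ya. is_path g m X u Ya \<and> (\<exists>Y'. is_path g m Ya [Rho 0 (splus g s), Pi 0 s] Y' \<and> is_path g m Y' v Y)"
        using G(3,4) rs vA vB by (intro exI[of _ A] conjI exI[of _ B]) (auto simp: is_arrow_def)
    qed
    have fin: "finite {w. G w \<noteq> 0}" by (rule finite_subset[of _ "{w1}"]) (auto simp: Ge path_vec_def)
    have "Fmor n g X G = FF n g X {w1} G" by (rule Fmor_FF) (auto simp: Ge path_vec_def)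
    also have "\<dots> = Fpath n g X w1" unfolding FF_def Ge by (simp add: path_vec_def)
    also have "\<dots> = (\<lambda>i j. 0)"
    proof -
      have "int (fst A) = int (fst X) + int (nrho u) - int (npi u)" using path_end[OF g(1) G(3)] by simp
      then have "fst X \<le> npi u" using rs by simp
      then have "\<not> npi w1 \<le> fst X" unfolding w1_def by (simp add: npi_append)
      then have "\<not> PP g X \<le> hh n g X (npi w1)" using valid_iff[OF g] by simp
      then show ?thesis unfolding path_formula[OF g p1] EE_def by (intro ext) auto
    qed
    finally show ?thesis using fin by simp
  qed
qed


lemma ideal_ker:
  assumes g: "0 < g" "g \<le> n" and c: "c \<in> (ideal g m X Y :: (arr list \<Rightarrow> 'k::field) set)"
  shows "Fmor n g X c = (\<lambda>i j. 0)"
proof -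
  obtain N a G where NG: "\<forall>k<(N::nat). G k \<in> (ideal_gens g m X Y :: (arr list \<Rightarrow> 'k) set)" "c = (\<lambda>w. \<Sum>k<N. a k * G k w)"
    using c unfolding ideal_def mem_Collect_eq by metis
  have gp: "finite {w. G k w \<noteq> 0} \<and> Fmor n g X (G k) = (\<lambda>i j. 0)" if "k < N" for k
    using gen_props[OF g] NG(1) that by blast
  define S where "S = (\<Union>k<N. {w. G k w \<noteq> 0})"
  have fS: "finite S" unfolding S_def using gp by auto
  have sub: "{w. c w \<noteq> 0} \<subseteq> S"
  proof
    fix w assume "w \<in> {w. c w \<noteq> 0}"
    then have "(\<Sum>k<N. a k * G k w) \<noteq> 0" using NG(2) by simp
    then obtain k where "k < N" "a k * G k w \<noteq> 0" by (meson lessThan_iff sum.not_neutral_contains_not_neutral)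
    then show "w \<in> S" unfolding S_def by auto
  qed
  have "Fmor n g X c = FF n g X S c" by (rule Fmor_FF[OF fS sub])
  also have "\<dots> = (\<lambda>i j. \<Sum>k<N. a k * FF n g X S (G k) i j)" unfolding NG(2) FF_lin ..
  also have "\<dots> = (\<lambda>i j. \<Sum>k<N. a k * Fmor n g X (G k) i j)"
  proof (intro ext sum.cong refl)
    fix i j k assume "k \<in> {..<N}"
    then have "Fmor n g X (G k) = FF n g X S (G k)" by (intro Fmor_FF[OF fS]) (auto simp: S_def)
    then show "a k * FF n g X S (G k) i j = a k * Fmor n g X (G k) i j" by simp
  qed
  also have "\<dots> = (\<lambda>i j. 0)" using gp by simp
  finally show ?thesis .
qed

lemma kQ_props:
  assumes "c \<in> kQ g m X Y"
  shows "finite {w. c w \<noteq> 0}" "\<And>w. c w \<noteq> 0 \<Longrightarrow> is_path g m X w Y"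
  using assms unfolding kQ_def by auto

lemma c_sum: "finite S \<Longrightarrow> {w. c w \<noteq> 0} \<subseteq> S \<Longrightarrow> c = (\<lambda>v. \<Sum>w\<in>S. c w * pv w v)"
proof
  fix v assume fS: "finite S" and sub: "{w. c w \<noteq> 0} \<subseteq> S"
  have "(\<Sum>w\<in>S. c w * pv w v) = (\<Sum>w\<in>S. if v = w then c v else 0)"
    by (intro sum.cong) (auto simp: path_vec_def)
  also have "\<dots> = (if v \<in> S then c v else 0)" using fS by (simp add: sum.delta)
  also have "\<dots> = c v" using sub by auto
  finally show "c v = (\<Sum>w\<in>S. c w * pv w v)" by simp
qed

lemma ker_ideal:
  assumes g: "0 < g" "g \<le> n" and c: "c \<in> (kQ g m X Y :: (arr list \<Rightarrow> 'k::field) set)"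
    and z: "Fmor n g X c = (\<lambda>i j. 0)"
  shows "c \<in> ideal g m X Y"
proof -
  define S where "S = {w. c w \<noteq> 0}"
  have fS: "finite S" and pS: "\<And>w. w \<in> S \<Longrightarrow> is_path g m X w Y" using kQ_props[OF c] unfolding S_def by auto
  define T where "T = {w \<in> S. npi w \<le> fst X}"
  define H where "H w = canon g X (npi w) (nrho w)" for w
  have fT: "finite T" unfolding T_def using fS by simp
  have ce: "c = (\<lambda>v. \<Sum>w\<in>S. c w * pv w v)" by (rule c_sum[OF fS]) (simp add: S_def)
  have I1: "(\<lambda>v. \<Sum>w\<in>S - T. c w * pv w v) \<in> (ideal g m X Y :: (arr list \<Rightarrow> 'k) set)"
  proof (rule ideal_sum)
    show "finite (S - T)" using fS by simp
    show "\<forall>w\<in>S - T. pv w \<in> (ideal g m X Y :: (arr list \<Rightarrow> 'k) set)"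
    proof
      fix w assume w: "w \<in> S - T"
      then have "\<not> npi w \<le> fst X" unfolding T_def by auto
      then show "pv w \<in> (ideal g m X Y :: (arr list \<Rightarrow> 'k) set)" using rw[OF g(1) pS, of w, where 'k='k] w by simp
    qed
  qed
  have I2: "(\<lambda>v. \<Sum>w\<in>T. c w * (pv w v - pv (H w) v)) \<in> (ideal g m X Y :: (arr list \<Rightarrow> 'k) set)"
  proof (rule ideal_sum[where h="\<lambda>w v. pv w v - pv (H w) v"])
    show "finite T" by (rule fT)
    show "\<forall>w\<in>T. (\<lambda>v. pv w v - pv (H w) v) \<in> (ideal g m X Y :: (arr list \<Rightarrow> 'k) set)"
    proof
      fix w assume w: "w \<in> T"
      then have "npi w \<le> fst X" "w \<in> S" unfolding T_def by auto
      then show "(\<lambda>v. pv w v - pv (H w) v) \<in> (ideal g m X Y :: (arr list \<Rightarrow> 'k) set)"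
        using rw[OF g(1) pS, of w, where 'k='k] unfolding H_def by simp
    qed
  qed
  have Heq: "H w1 = H w2 \<longleftrightarrow> nrho w1 = nrho w2" if "w1 \<in> S" "w2 \<in> S" for w1 w2
  proof
    assume "H w1 = H w2" then show "nrho w1 = nrho w2" unfolding H_def by (metis nrho_canon)
  next
    assume e: "nrho w1 = nrho w2"
    have "npi w1 = npi w2" using path_end[OF g(1) pS[OF that(1)]] path_end[OF g(1) pS[OF that(2)]] e by simp
    then show "H w1 = H w2" unfolding H_def using e by simp
  qed
  have Z3: "(\<Sum>w\<in>T. c w * pv (H w) v) = (0::'k)" for v
  proof (cases "\<exists>w0\<in>T. H w0 = v")
    case False
    then show ?thesis by (intro sum.neutral) (auto simp: path_vec_def)
  next
    case True
    then obtain w0 where w0: "w0 \<in> T" "H w0 = v" by blast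
    have w0S: "w0 \<in> S" using w0 unfolding T_def by simp
    define i0 where "i0 = nrho w0"
    have "(\<Sum>w\<in>T. c w * pv (H w) v) = (\<Sum>w\<in>S. c w * (if w \<in> T \<and> nrho w = i0 then 1 else 0))"
    proof -
      have "(\<Sum>w\<in>T. c w * pv (H w) v) = (\<Sum>w\<in>T. c w * (if w \<in> T \<and> nrho w = i0 then 1 else 0))"
        by (intro sum.cong refl) (use w0 Heq w0S in \<open>auto simp: path_vec_def T_def i0_def\<close>)
      also have "\<dots> = (\<Sum>w\<in>S. c w * (if w \<in> T \<and> nrho w = i0 then 1 else 0))"
        by (intro sum.mono_neutral_left fS) (auto simp: T_def)
      finally show ?thesis .
    qed
    also have "\<dots> = Fmor n g X c (nat (PP g X + dd n g X i0)) (nat (PP g X))"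
    proof -
      have P0: "0 < PP g X" using PP_bounds[OF g(1), of X] by linarith
      have d0: "0 \<le> dd n g X i0" by (rule dd_nonneg[OF g(1)])
      have "Fmor n g X c (nat (PP g X + dd n g X i0)) (nat (PP g X)) =
          (\<Sum>w\<in>S. c w * EE n g X (nrho w) (npi w) (nat (PP g X + dd n g X i0)) (nat (PP g X)))"
        unfolding Fmor_def S_def[symmetric] by (intro sum.cong refl) (simp add: path_formula[OF g pS])
      also have "\<dots> = (\<Sum>w\<in>S. c w * (if w \<in> T \<and> nrho w = i0 then 1 else 0))"
      proof (intro sum.cong refl)
        fix w assume wS: "w \<in> S"
        have "(PP g X \<le> hh n g X (npi w)) = (w \<in> T)" using valid_iff[OF g] wS unfolding T_def by simp
        moreover have "(dd n g X i0 = dd n g X (nrho w)) = (nrho w = i0)"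
        proof
          assume "dd n g X i0 = dd n g X (nrho w)"
          then have "dd n g X (nrho w) = dd n g X (nrho w0)" unfolding i0_def by simp
          then show "nrho w = i0" unfolding i0_def by (rule dd_inj[OF g(1) pS[OF wS] pS[OF w0S]])
        next
          assume "nrho w = i0" then show "dd n g X i0 = dd n g X (nrho w)" by simp
        qed
        ultimately show "c w * EE n g X (nrho w) (npi w) (nat (PP g X + dd n g X i0)) (nat (PP g X)) =
            c w * (if w \<in> T \<and> nrho w = i0 then 1 else 0)"
          unfolding EE_def using P0 d0 by auto
      qed
      finally show ?thesis by simp
    qed
    also have "\<dots> = 0" using z by simp
    finally show ?thesis .
  qed
  have "c = (\<lambda>v. (\<Sum>w\<in>S - T. c w * pv w v) + (\<Sum>w\<in>T. c w * (pv w v - pv (H w) v)))"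
  proof
    fix v
    have "(\<Sum>w\<in>S. c w * pv w v) = (\<Sum>w\<in>S - T. c w * pv w v) + (\<Sum>w\<in>T. c w * pv w v)"
      using fS by (intro sum.subset_diff) (auto simp: T_def)
    also have "(\<Sum>w\<in>T. c w * pv w v) = (\<Sum>w\<in>T. c w * (pv w v - pv (H w) v)) + (\<Sum>w\<in>T. c w * pv (H w) v)"
      by (simp add: sum.distrib[symmetric] algebra_simps)
    finally show "c v = (\<Sum>w\<in>S - T. c w * pv w v) + (\<Sum>w\<in>T. c w * (pv w v - pv (H w) v))"
      using fun_cong[OF ce, of v] Z3[of v] by simp
  qed
  then show ?thesis using ideal_add[OF I1 I2] by simp
qed


lemma surj:
  assumes g: "0 < g" "g \<le> n" and X: "is_vertex g m X" and Y: "is_vertex g m Y"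
    and M: "M \<in> (HomK n g (Fobj n g X) (Fobj n g Y) :: 'k::field mat set)"
  shows "\<exists>c \<in> (kQ g m X Y :: (arr list \<Rightarrow> 'k) set). Fmor n g X c = M"
proof -
  obtain pV qV where V: "Fobj n g X = (pV, qV)" by fastforce
  obtain pW qW where W: "Fobj n g Y = (pW, qW)" by fastforce
  have gV: "goodI n g (pV, qV)" using goodI_Fobj[OF g, of X] V by simp
  have gW: "goodI n g (pW, qW)" using goodI_Fobj[OF g, of Y] W by simp
  define D where "D = Dset n (pV, qV) (pW, qW)"
  have fD: "finite D" unfolding D_def by (rule Dset_finite)
  define coef where "coef d = M (nat (int pV + d)) pV" for d
  have Mr: "M = (\<lambda>x y. \<Sum>d\<in>D. coef d * Em (pV, qV) (pW, qW) d x y)"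
    unfolding D_def coef_def by (rule HomK_repr[OF gV gW]) (use M V W in simp)
  have ex: "\<exists>h. is_path g m X h Y \<and> dd n g X (nrho h) = d" if dD: "d \<in> D" for d
  proof -
    obtain i j where ij: "j \<le> fst X" "int (fst Y) = int (fst X) + int i - int j"
      "int g dvd (int (snd X) - int j - int (snd Y))" "dd n g X i = d"
      using surj_arith[OF g, of d X Y] dD unfolding D_def V W by blast
    have "is_path g m X (canon g X j i) Y" by (rule canon_path[OF X Y ij(1-3)])
    then show ?thesis using ij(4) nrho_canon by metis
  qed
  define Hd where "Hd d = (SOME h. is_path g m X h Y \<and> dd n g X (nrho h) = d)" for d
  have HP: "is_path g m X (Hd d) Y \<and> dd n g X (nrho (Hd d)) = d" if "d \<in> D" for d
    unfolding Hd_def using someI_ex[OF ex[OF that]] .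
  have inj: "inj_on Hd D"
  proof (rule inj_onI)
    fix d d' assume "d \<in> D" "d' \<in> D" "Hd d = Hd d'"
    then show "d = d'" using HP by metis
  qed
  define c where "c v = (\<Sum>d\<in>D. coef d * pv (Hd d) v)" for v :: "arr list"
  have c0: "c v = 0" if "v \<notin> Hd ` D" for v
    unfolding c_def using that by (intro sum.neutral) (auto simp: path_vec_def)
  have cH: "c (Hd d) = coef d" if d: "d \<in> D" for d
  proof -
    have "c (Hd d) = (\<Sum>d'\<in>D. if d' = d then coef d else 0)"
      unfolding c_def by (intro sum.cong refl) (use inj d in \<open>auto simp: path_vec_def inj_on_def\<close>)
    also have "\<dots> = coef d" using fD d by (simp add: sum.delta')
    finally show ?thesis .
  qed
  have supp: "{w. c w \<noteq> 0} \<subseteq> Hd ` D" using c0 by blast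
  have cK: "c \<in> kQ g m X Y"
    unfolding kQ_def mem_Collect_eq
  proof
    show "finite {w. c w \<noteq> 0}" by (rule finite_subset[OF supp]) (use fD in simp)
    show "\<forall>w. c w \<noteq> 0 \<longrightarrow> is_path g m X w Y" using supp HP by blast
  qed
  have "Fmor n g X c = FF n g X (Hd ` D) c" by (rule Fmor_FF[OF _ supp]) (use fD in simp)
  also have "\<dots> = (\<lambda>x y. \<Sum>d\<in>D. c (Hd d) * Fpath n g X (Hd d) x y)"
    unfolding FF_def by (intro ext) (simp add: sum.reindex[OF inj])
  also have "\<dots> = (\<lambda>x y. \<Sum>d\<in>D. coef d * Em (pV, qV) (pW, qW) d x y)"
  proof (intro ext sum.cong refl)
    fix x y d assume d: "d \<in> D"
    have "Fpath n g X (Hd d) = (Em (pV, qV) (pW, qW) d :: 'k mat)"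
      using Fpath_Em[OF g conjunct1[OF HP[OF d]]] HP[OF d] V W by simp
    then show "c (Hd d) * Fpath n g X (Hd d) x y = coef d * Em (pV, qV) (pW, qW) d x y"
      using cH[OF d] by simp
  qed
  also have "\<dots> = M" using Mr by simp
  finally show ?thesis using cK by blast
qed

theorem mainTheorem2:
  fixes n g m :: nat
  assumes "1 \<le> n" and "1 \<le> g" and "g \<le> n"
  shows "inj_on (Fobj n g) {X. is_vertex g m X}
       \<and> (\<forall>X Y. is_vertex g m X \<longrightarrow> is_vertex g m Y \<longrightarrow>
            (\<forall>c \<in> (kQ g m X Y :: (arr list \<Rightarrow> 'k::alg_closed_field) set).
               Fmor n g X c \<in> HomK n g (Fobj n g X) (Fobj n g Y)
             \<and> (Fmor n g X c = (\<lambda>i j. 0) \<longleftrightarrow> c \<in> ideal g m X Y))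
          \<and> Fmor n g X ` (kQ g m X Y :: (arr list \<Rightarrow> 'k) set) = HomK n g (Fobj n g X) (Fobj n g Y))"
proof -
  have g: "0 < g" "g \<le> n" using assms by auto
  have inj: "inj_on (Fobj n g) {X. is_vertex g m X}"
    by (rule inj_onI) (use Fobj_inj[OF g] in auto)
  have hom: "Fmor n g X c \<in> HomK n g (Fobj n g X) (Fobj n g Y)"
    if c: "c \<in> (kQ g m X Y :: (arr list \<Rightarrow> 'k) set)" for X Y c
  proof -
    have "(\<lambda>i j. \<Sum>w\<in>{w. c w \<noteq> 0}. c w * Fpath n g X w i j) \<in> HomK n g (Fobj n g X) (Fobj n g Y)"
    proof (rule HomK_lincomb, intro ballI)
      fix w assume "w \<in> {w. c w \<noteq> 0}"
      then show "Fpath n g X w \<in> HomK n g (Fobj n g X) (Fobj n g Y)"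
        using Fpath_HomK[OF g kQ_props(2)[OF c]] by simp
    qed
    then show ?thesis unfolding Fmor_def .
  qed
  have main: "(\<forall>c \<in> (kQ g m X Y :: (arr list \<Rightarrow> 'k) set).
               Fmor n g X c \<in> HomK n g (Fobj n g X) (Fobj n g Y)
             \<and> (Fmor n g X c = (\<lambda>i j. 0) \<longleftrightarrow> c \<in> ideal g m X Y))
          \<and> Fmor n g X ` (kQ g m X Y :: (arr list \<Rightarrow> 'k) set) = HomK n g (Fobj n g X) (Fobj n g Y)"
    if X: "is_vertex g m X" and Y: "is_vertex g m Y" for X Y
  proof
    show "\<forall>c \<in> (kQ g m X Y :: (arr list \<Rightarrow> 'k) set).
               Fmor n g X c \<in> HomK n g (Fobj n g X) (Fobj n g Y)
             \<and> (Fmor n g X c = (\<lambda>i j. 0) \<longleftrightarrow> c \<in> ideal g m X Y)"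
      using hom ker_ideal[OF g] ideal_ker[OF g] by blast
    show "Fmor n g X ` (kQ g m X Y :: (arr list \<Rightarrow> 'k) set) = HomK n g (Fobj n g X) (Fobj n g Y)"
    proof
      show "Fmor n g X ` (kQ g m X Y :: (arr list \<Rightarrow> 'k) set) \<subseteq> HomK n g (Fobj n g X) (Fobj n g Y)"
        using hom by blast
      show "HomK n g (Fobj n g X) (Fobj n g Y) \<subseteq> Fmor n g X ` (kQ g m X Y :: (arr list \<Rightarrow> 'k) set)"
        using surj[OF g X Y] by blast
    qed
  qed
  show ?thesis using inj main by blast
qed


end
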